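(* Let $q\ge3$, $G\in\mathbb G^q$ and $S=\Psi(G)$. Let $w$ be a non-root white vertex of $S$ such that, for all colors except one color $i$, the neighbor of $w$ of that color is a leaf of $S$, and such that the color-$i$ neighbor $v$ of $w$ has degree at least $2$. Let $S'$ be obtained from $S$ by deleting $w$, its $q-1$ leaf neighbors, and the edge $\{w,v\}$ (the cyclic order at $v$ being restricted to the remaining edges). Then $S'\in\mathbb S^q$, and the colored triangulations dual to $G_{\hat 0}$ and to $(\Psi^{-1}(S'))_{\hat 0}$ are PL-homeomorphic. (Iterating, removing pending trees from a constellation does not change the topology of the dual of $G_{\hat 0}$.)
   Context: Fix an integer $q\ge 2$. A $(q+1)$-edge-colored graph (colored graph) is a finite connected graph, multiple edges allowed and no loops, whose edges carry colors in $\{0,1,\dots,q\}$ such that every vertex is incident to exactly one edge of each color. It is rooted if one color-0 edge is distinguished and oriented; it is bipartite if its vertices can be colored black and white so that every edge joins a black and a white vertex, with the convention that the origin of the root edge is black. $\mathbb G^q$ denotes the set of rooted bipartite colored graphs. $G_{\hat 0}$ denotes the graph obtained from $G$ by deleting all color-0 edges. Constellations: given $G\in\mathbb G^q$, its constellation $S=\Psi(G)$ is obtained as follows: orient every edge from its black to its white endpoint; contract every color-0 edge into a single vertex, called a white vertex of $S$ (the one coming from the root edge is the root vertex). For each $i\in\{1,\dots,q\}$ the color-$i$ edges now form directed cycles; for each such cycle, passing through white vertices $w_1,\dots,w_p$ in this cyclic order, add a new vertex of color $i$ joined by one color-$i$ edge to each $w_k$, equip the new vertex with the cyclic order $(w_1,\dots,w_p)$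 of its incident edges, and delete the original color-$i$ edges of the cycle. Thus $S$ is a connected graph with a distinguished white vertex, in which each white vertex has exactly one incident edge of each color $1,\dots,q$, each edge of color $i$ joins a white vertex to a vertex of color $i$, and each colored vertex carries a cyclic order of its incident edges; such objects form the set $\mathbb S^q$ of $q$-constellations, and $\Psi:\mathbb G^q\to\mathbb S^q$ is a bijection. Dual triangulation: for a connected graph $H$ in which every vertex has exactly one incident edge of each color of a set $A$ with $|A|=k$, the dual $(k-1)$-dimensional colored triangulation $\mathcal T(H)$ is obtained by taking, for each vertex of $H$, a $(k-1)$-simplex whose vertices are labelled bijectively by $A$, and, for each edge of color $a$ of $H$, identifying the facets opposite to the vertex labelled $a$ in the simplices of its two endpoints, matching vertices with equal labels. *)

theory Defs
  imports "HOL-Analysis.Analysis" "HOL-Combinatorics.Permutations"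
begin

(* Colours: the colour set {0,...,q} is modelled as 'c option, None = colour 0,
   Some c = colours 1..q, with q = CARD('c).
   A (q+1)-edge-coloured graph: vertex set V and, for every colour a, the function
   sigma a sending a vertex to the other endpoint of its unique colour-a edge
   (a fixed-point-free involution; multiple edges allowed, no loops). *)

definition colored_graph :: "'v set \<Rightarrow> ('a \<Rightarrow> 'v \<Rightarrow> 'v) \<Rightarrow> bool" where
  "colored_graph V \<sigma> \<longleftrightarrow> finite V \<and> V \<noteq> {} \<and>
     (\<forall>a. \<forall>x\<in>V. \<sigma> a x \<in> V \<and> \<sigma> a x \<noteq> x \<and> \<sigma> a (\<sigma> a x) = x) \<and>
     (\<forall>x\<in>V. \<forall>y\<in>V. (\<lambda>p s. \<exists>a. s = \<sigma> a p)\<^sup>*\<^sup>* x y)"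

(* rooted bipartite coloured graph: r is the origin of the (oriented) w0 colour-0 edge,
   coloured black *)
definition Gq :: "'v set \<Rightarrow> ('c option \<Rightarrow> 'v \<Rightarrow> 'v) \<Rightarrow> 'v \<Rightarrow> bool" where
  "Gq V \<sigma> r \<longleftrightarrow> colored_graph V \<sigma> \<and> r \<in> V \<and>
     (\<exists>black. black r \<and> (\<forall>a. \<forall>x\<in>V. black (\<sigma> a x) \<longleftrightarrow> \<not> black x))"

definition is_black :: "('c option \<Rightarrow> 'v \<Rightarrow> 'v) \<Rightarrow> 'v \<Rightarrow> 'v \<Rightarrow> bool" where
  "is_black \<sigma> r x \<longleftrightarrow> (\<lambda>p s. \<exists>a b. s = \<sigma> b (\<sigma> a p))\<^sup>*\<^sup>* r x"

(* q-constellation: white vertices W, root white vertex, nb c w = the colour-c vertex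
   (c, nb c w) adjacent to w, and succ c w = the successor of (the edge to) w in the
   cyclic order at the colour-c vertex nb c w; the cyclic order at every coloured vertex
   is a single cycle on its incident edges. *)
definition constellation ::
  "'w set \<Rightarrow> 'w \<Rightarrow> ('c \<Rightarrow> 'w \<Rightarrow> 'x) \<Rightarrow> ('c \<Rightarrow> 'w \<Rightarrow> 'w) \<Rightarrow> bool" where
  "constellation W w0 nb succ \<longleftrightarrow> finite W \<and> w0 \<in> W \<and>
     (\<forall>c. succ c permutes W \<and> (\<forall>w\<in>W. nb c (succ c w) = nb c w) \<and>
        (\<forall>w\<in>W. \<forall>w'\<in>W. nb c w = nb c w' \<longrightarrow> (\<exists>n. (succ c ^^ n) w = w'))) \<and>
     (\<forall>w\<in>W. \<forall>w'\<in>W.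
        (\<lambda>p s. p \<in> W \<and> s \<in> W \<and> (\<exists>c. nb c p = nb c s))\<^sup>*\<^sup>* w w')"

definition nbdeg :: "'w set \<Rightarrow> ('c \<Rightarrow> 'w \<Rightarrow> 'x) \<Rightarrow> 'c \<Rightarrow> 'w \<Rightarrow> nat" where
  "nbdeg W nb c w = card {w'\<in>W. nb c w' = nb c w}"

(* S = Psi(G) up to isomorphism: white vertices of S <-> colour-0 edges of G, identified
   with their black endpoints; the colour-c directed cycle goes from the colour-0 edge at
   b to the colour-0 edge containing sigma_c(b). *)
definition psi_rel ::
  "'v set \<Rightarrow> ('c option \<Rightarrow> 'v \<Rightarrow> 'v) \<Rightarrow> 'v \<Rightarrow>
   'w set \<Rightarrow> 'w \<Rightarrow> ('c \<Rightarrow> 'w \<Rightarrow> 'x) \<Rightarrow> ('c \<Rightarrow> 'w \<Rightarrow> 'w) \<Rightarrow> bool" where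
  "psi_rel V \<sigma> r W w0 nb succ \<longleftrightarrow>
     (\<exists>\<phi>. bij_betw \<phi> {x\<in>V. is_black \<sigma> r x} W \<and> \<phi> r = w0 \<and>
        (\<forall>c. \<forall>b\<in>{x\<in>V. is_black \<sigma> r x}.
           \<phi> (\<sigma> None (\<sigma> (Some c) b)) = succ c (\<phi> b)))"

(* removing the white vertex w (and its leaves and the edge to its colour-i neighbour):
   w is skipped in every cyclic order *)
definition remove_succ :: "('c \<Rightarrow> 'w \<Rightarrow> 'w) \<Rightarrow> 'w \<Rightarrow> 'c \<Rightarrow> 'w \<Rightarrow> 'w" where
  "remove_succ succ w c x =
     (if x = w then x else if succ c x = w then succ c w else succ c x)"

(* ---- dual coloured triangulation and its PL topology ----
   For H = (V, tau) with colours 'c, T(H) has one simplex per vertex v, with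
   barycentric coordinates t : real^'c (vertex labelled c has t$c = 1).
   The facet opposite label c is {t$c = 0}; an edge of colour c glues these facets. *)

definition std_simplex :: "(real^'c) set" where
  "std_simplex = {t. (\<forall>c. 0 \<le> t$c) \<and> (\<Sum>c\<in>UNIV. t$c) = 1}"

definition glue :: "'v set \<Rightarrow> ('c \<Rightarrow> 'v \<Rightarrow> 'v) \<Rightarrow> real^'c \<Rightarrow> 'v \<Rightarrow> 'v \<Rightarrow> bool" where
  "glue V \<tau> t p s \<longleftrightarrow> p \<in> V \<and> (\<exists>c. t$c = 0 \<and> s = \<tau> c p)"

definition pt :: "'v set \<Rightarrow> ('c \<Rightarrow> 'v \<Rightarrow> 'v) \<Rightarrow> 'v \<Rightarrow> real^'c \<Rightarrow> ('v \<times> (real^'c)) set" where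
  "pt V \<tau> v t = {(u, t) | u. (glue V \<tau> t)\<^sup>*\<^sup>* v u}"

definition realization :: "'v set \<Rightarrow> ('c \<Rightarrow> 'v \<Rightarrow> 'v) \<Rightarrow> ('v \<times> (real^'c)) set set" where
  "realization V \<tau> = {pt V \<tau> v t | v t. v \<in> V \<and> t \<in> std_simplex}"

definition PL_map ::
  "'v set \<Rightarrow> ('c \<Rightarrow> 'v \<Rightarrow> 'v) \<Rightarrow> 'u set \<Rightarrow> ('d \<Rightarrow> 'u \<Rightarrow> 'u) \<Rightarrow>
   (('v \<times> (real^'c)) set \<Rightarrow> ('u \<times> (real^'d)) set) \<Rightarrow> bool" where
  "PL_map V1 \<tau>1 V2 \<tau>2 f \<longleftrightarrow>
     f ` realization V1 \<tau>1 \<subseteq> realization V2 \<tau>2 \<and>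
     (\<forall>v\<in>V1. \<exists>(n::nat) (K :: nat \<Rightarrow> (real^'c) set) (u :: nat \<Rightarrow> 'u)
                 (L :: nat \<Rightarrow> real^'c \<Rightarrow> real^'d).
        (\<Union>j<n. K j) = std_simplex \<and>
        (\<forall>j<n. (\<exists>F. finite F \<and> K j = convex hull F) \<and> u j \<in> V2 \<and>
           (\<exists>A b. linear A \<and> (\<forall>t\<in>K j. L j t = A t + b)) \<and>
           (\<forall>t\<in>K j. L j t \<in> std_simplex \<and>
              f (pt V1 \<tau>1 v t) = pt V2 \<tau>2 (u j) (L j t))))"

definition PL_homeomorphic ::
  "'v set \<Rightarrow> ('c::finite \<Rightarrow> 'v \<Rightarrow> 'v) \<Rightarrow> 'u set \<Rightarrow> ('d::finite \<Rightarrow> 'u \<Rightarrow> 'u) \<Rightarrow> bool" where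
  "PL_homeomorphic V1 \<tau>1 V2 \<tau>2 \<longleftrightarrow>
     (\<exists>f. bij_betw f (realization V1 \<tau>1) (realization V2 \<tau>2) \<and>
          PL_map V1 \<tau>1 V2 \<tau>2 f \<and>
          PL_map V2 \<tau>2 V1 \<tau>1 (inv_into (realization V1 \<tau>1) f))"

(* G with colour-0 edges deleted *)
definition hat0 :: "('c option \<Rightarrow> 'v \<Rightarrow> 'v) \<Rightarrow> 'c \<Rightarrow> 'v \<Rightarrow> 'v" where
  "hat0 \<sigma> c = \<sigma> (Some c)"

end

theory Submission
  imports Defs
begin

definition cfun :: "('v \<Rightarrow> 'r \<Rightarrow> 'z) \<Rightarrow> ('v \<times> 'r) set \<Rightarrow> 'z" where
  "cfun R P = R (fst (SOME z. z \<in> P)) (snd (SOME z. z \<in> P))"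

definition invol :: "'v set \<Rightarrow> ('c \<Rightarrow> 'v \<Rightarrow> 'v) \<Rightarrow> bool" where
  "invol V \<tau> \<longleftrightarrow> (\<forall>c v. v \<in> V \<longrightarrow> \<tau> c v \<in> V \<and> \<tau> c (\<tau> c v) = v)"

lemma glue_sym: "invol V \<tau> \<Longrightarrow> glue V \<tau> t p s \<Longrightarrow> glue V \<tau> t s p"
  unfolding glue_def invol_def by metis

lemma glue_rtr_sym: assumes "invol V \<tau>" "(glue V \<tau> t)\<^sup>*\<^sup>* p s" shows "(glue V \<tau> t)\<^sup>*\<^sup>* s p"
  using assms(2) by (induction rule: rtranclp_induct) (auto intro: converse_rtranclp_into_rtranclp glue_sym[OF assms(1)])

lemma pt_step: assumes "invol V \<tau>" "glue V \<tau> t p s" shows "pt V \<tau> p t = pt V \<tau> s t"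
proof -
  have "(glue V \<tau> t)\<^sup>*\<^sup>* p u \<longleftrightarrow> (glue V \<tau> t)\<^sup>*\<^sup>* s u" for u
    using assms glue_sym[OF assms]
    by (meson converse_rtranclp_into_rtranclp rtranclp.rtrancl_refl rtranclp_trans)
  then show ?thesis unfolding pt_def by simp
qed

lemma pt_rtr: assumes "invol V \<tau>" "(glue V \<tau> t)\<^sup>*\<^sup>* p s" shows "pt V \<tau> p t = pt V \<tau> s t"
  using assms(2) by (induction rule: rtranclp_induct) (auto simp: pt_step[OF assms(1)])

lemma cfun_pt:
  assumes "\<And>p s. glue V \<tau> t p s \<Longrightarrow> R p t = R s t"
  shows "cfun R (pt V \<tau> v t) = R v t"
proof -
  have ne: "(v, t) \<in> pt V \<tau> v t" unfolding pt_def by auto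
  define z where "z = (SOME z. z \<in> pt V \<tau> v t)"
  have "z \<in> pt V \<tau> v t" unfolding z_def using ne by (rule someI)
  then obtain u where z: "z = (u, t)" "(glue V \<tau> t)\<^sup>*\<^sup>* v u" unfolding pt_def by auto
  have "R u t = R v t" using z(2)
    by (induction rule: rtranclp_induct) (auto dest: assms)
  then show ?thesis unfolding cfun_def z_def[symmetric] z by simp
qed



lemma PL_map_cong:
  fixes V1 :: "'v set" and \<tau>1 :: "'c::finite \<Rightarrow> 'v \<Rightarrow> 'v" and V2 :: "'u set" and \<tau>2 :: "'d::finite \<Rightarrow> 'u \<Rightarrow> 'u"
  assumes "PL_map V1 \<tau>1 V2 \<tau>2 f" "\<forall>P\<in>realization V1 \<tau>1. g P = f P"
  shows "PL_map V1 \<tau>1 V2 \<tau>2 g"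
proof -
  have fimg: "f ` realization V1 \<tau>1 \<subseteq> realization V2 \<tau>2"
    using assms(1) unfolding PL_map_def by (rule conjunct1)
  have "g ` realization V1 \<tau>1 = f ` realization V1 \<tau>1"
    using assms(2) by (intro image_cong) auto
  then have img: "g ` realization V1 \<tau>1 \<subseteq> realization V2 \<tau>2" using fimg by simp
  have inR: "v \<in> V1 \<Longrightarrow> t \<in> std_simplex \<Longrightarrow> g (pt V1 \<tau>1 v t) = f (pt V1 \<tau>1 v t)" for v t
  proof -
    assume "v \<in> V1" "t \<in> std_simplex"
    then have "pt V1 \<tau>1 v t \<in> realization V1 \<tau>1" unfolding realization_def by blast
    then show ?thesis using assms(2) by blast
  qed
  show ?thesis unfolding PL_map_def
  proof (intro conjI img ballI)
    fix v assume v: "v \<in> V1"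
    have all: "\<forall>v\<in>V1. \<exists>(n::nat) (K :: nat \<Rightarrow> (real^'c) set) (u :: nat \<Rightarrow> 'u)
                 (L :: nat \<Rightarrow> real^'c \<Rightarrow> real^'d).
        (\<Union>j<n. K j) = std_simplex \<and>
        (\<forall>j<n. (\<exists>F. finite F \<and> K j = convex hull F) \<and> u j \<in> V2 \<and>
           (\<exists>A b. linear A \<and> (\<forall>t\<in>K j. L j t = A t + b)) \<and>
           (\<forall>t\<in>K j. L j t \<in> std_simplex \<and>
              f (pt V1 \<tau>1 v t) = pt V2 \<tau>2 (u j) (L j t)))"
      using assms(1) unfolding PL_map_def by (rule conjunct2)
    from bspec[OF all v] obtain n and K :: "nat \<Rightarrow> (real^'c) set" and u :: "nat \<Rightarrow> 'u"
      and L :: "nat \<Rightarrow> real^'c \<Rightarrow> real^'d" where H: "(\<Union>j<n. K j) = std_simplex"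
      "\<forall>j<n. (\<exists>F. finite F \<and> K j = convex hull F) \<and> u j \<in> V2 \<and>
           (\<exists>A b. linear A \<and> (\<forall>t\<in>K j. L j t = A t + b)) \<and>
           (\<forall>t\<in>K j. L j t \<in> std_simplex \<and>
              f (pt V1 \<tau>1 v t) = pt V2 \<tau>2 (u j) (L j t))"
      by (elim exE conjE) (intro that, assumption+)
    have "\<forall>j<n. \<forall>t\<in>K j. g (pt V1 \<tau>1 v t) = f (pt V1 \<tau>1 v t)"
    proof (intro allI impI ballI)
      fix j t assume "j < n" "t \<in> K j"
      then have "t \<in> std_simplex" using H(1) by blast
      then show "g (pt V1 \<tau>1 v t) = f (pt V1 \<tau>1 v t)" using inR v by blast
    qed
    with H show "\<exists>(n::nat) (K :: nat \<Rightarrow> (real^'c) set) (u :: nat \<Rightarrow> 'u)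
                 (L :: nat \<Rightarrow> real^'c \<Rightarrow> real^'d).
        (\<Union>j<n. K j) = std_simplex \<and>
        (\<forall>j<n. (\<exists>F. finite F \<and> K j = convex hull F) \<and> u j \<in> V2 \<and>
           (\<exists>A b. linear A \<and> (\<forall>t\<in>K j. L j t = A t + b)) \<and>
           (\<forall>t\<in>K j. L j t \<in> std_simplex \<and>
              g (pt V1 \<tau>1 v t) = pt V2 \<tau>2 (u j) (L j t)))"
      by (intro exI[of _ n] exI[of _ K] exI[of _ u] exI[of _ L]) simp
  qed
qed

lemma PL_homeo_intro:
  assumes "PL_map V1 \<tau>1 V2 \<tau>2 f" "PL_map V2 \<tau>2 V1 \<tau>1 g"
    "\<forall>P\<in>realization V1 \<tau>1. g (f P) = P" "\<forall>Q\<in>realization V2 \<tau>2. f (g Q) = Q"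
  shows "PL_homeomorphic V1 \<tau>1 V2 \<tau>2"
proof -
  have fi: "f ` realization V1 \<tau>1 \<subseteq> realization V2 \<tau>2" and gi: "g ` realization V2 \<tau>2 \<subseteq> realization V1 \<tau>1"
    using assms(1,2) unfolding PL_map_def by auto
  have bij: "bij_betw f (realization V1 \<tau>1) (realization V2 \<tau>2)"
    proof (rule bij_betw_byWitness[where f'=g])
    show "\<forall>a\<in>realization V1 \<tau>1. g (f a) = a" using assms(3) by blast
    show "\<forall>a'\<in>realization V2 \<tau>2. f (g a') = a'" using assms(4) by blast
  qed (use fi gi in blast)+
  have "\<forall>Q\<in>realization V2 \<tau>2. inv_into (realization V1 \<tau>1) f Q = g Q"
  proof
    fix Q assume Q: "Q \<in> realization V2 \<tau>2"
    then have gQ: "g Q \<in> realization V1 \<tau>1" using gi by blast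
    have "inv_into (realization V1 \<tau>1) f (f (g Q)) = g Q"
      using bij gQ by (simp add: bij_betw_def)
    then show "inv_into (realization V1 \<tau>1) f Q = g Q" using assms(4) Q by simp
  qed
  then have "PL_map V2 \<tau>2 V1 \<tau>1 (inv_into (realization V1 \<tau>1) f)"
    by (intro PL_map_cong[OF assms(2)]) auto
  then show ?thesis unfolding PL_homeomorphic_def using bij assms(1) by (intro exI[of _ f]) simp
qed



lemma polyh_le: "polyhedron {t::real^'c::finite. k1 * t$a \<le> k2 * t$b}"
proof -
  have "{t::real^'c. k1 * t$a \<le> k2 * t$b} = {t. (k1 *\<^sub>R axis a 1 - k2 *\<^sub>R axis b 1) \<bullet> t \<le> 0}"
    by (auto simp: inner_diff_left inner_axis')
  then show ?thesis by (simp add: polyhedron_halfspace_le)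
qed

lemma polyh_ge0: "polyhedron {t::real^'c::finite. 0 \<le> t$c}"
  using polyh_le[of 0 c 1 c] by simp

lemma polyh_le2: "polyhedron {t::real^'c::finite. t$a \<le> t$b}"
  using polyh_le[of 1 a 1 b] by simp

lemma std_simplex_polyh: "polyhedron (std_simplex :: (real^'c::finite) set)"
proof -
  have ip: "(\<chi> k. 1) \<bullet> t = (\<Sum>k\<in>UNIV. t$k)" for t :: "real^'c"
    by (simp add: inner_vec_def)
  have e: "std_simplex = (\<Inter>c\<in>UNIV. {t::real^'c. 0 \<le> t$c}) \<inter> {t. (\<chi> k. 1) \<bullet> t = 1}"
    unfolding std_simplex_def ip by blast
  have "polyhedron (\<Inter>c\<in>UNIV. {t::real^'c. 0 \<le> t$c})"
    by (rule polyhedron_Inter) (auto intro: polyh_ge0)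
  then show ?thesis unfolding e by (intro polyhedron_Int polyhedron_hyperplane)
qed

lemma std_simplex_bounded: "bounded (std_simplex :: (real^'c::finite) set)"
proof -
  have "std_simplex \<subseteq> cbox (0::real^'c) (\<chi> k. 1)"
  proof
    fix t :: "real^'c" assume t: "t \<in> std_simplex"
    have "t$c \<le> 1" for c
    proof -
      have "t$c \<le> (\<Sum>k\<in>UNIV. t$k)"
        using t unfolding std_simplex_def by (intro member_le_sum) auto
      then show ?thesis using t unfolding std_simplex_def by auto
    qed
    then show "t \<in> cbox 0 (\<chi> k. 1)" using t unfolding std_simplex_def by (auto simp: mem_box_cart)
  qed
  then show ?thesis using bounded_cbox bounded_subset by blast
qed

lemma polytope_piece:
  fixes i c :: "'c::finite"
  shows "\<exists>F. finite F \<and> std_simplex \<inter> {t. \<forall>c'. c' \<noteq> i \<longrightarrow> t$c \<le> t$c'}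
     \<inter> {t::real^'c. k1 * t$i \<le> k2 * t$c} \<inter> {t. k3 * t$i \<le> k4 * t$c} = convex hull F"
proof -
  have e: "{t::real^'c. \<forall>c'. c' \<noteq> i \<longrightarrow> t$c \<le> t$c'} = (\<Inter>c'\<in>UNIV-{i}. {t. 1 * t$c \<le> 1 * t$c'})"
    by auto
  have "polyhedron {t::real^'c. \<forall>c'. c' \<noteq> i \<longrightarrow> t$c \<le> t$c'}"
    unfolding e by (rule polyhedron_Inter) (auto intro: polyh_le2)
  then have "polytope (std_simplex \<inter> {t. \<forall>c'. c' \<noteq> i \<longrightarrow> t$c \<le> t$c'}
     \<inter> {t::real^'c. k1 * t$i \<le> k2 * t$c} \<inter> {t. k3 * t$i \<le> k4 * t$c})"
    unfolding polytope_eq_bounded_polyhedron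
    using std_simplex_polyh std_simplex_bounded polyh_le
    by (intro conjI polyhedron_Int bounded_Int) auto
  then show ?thesis unfolding polytope_def by blast
qed

lemma polytope_simplex: "\<exists>F. finite F \<and> (std_simplex :: (real^'c::finite) set) = convex hull F"
  using std_simplex_polyh std_simplex_bounded unfolding polytope_def[symmetric]
  by (simp add: polytope_eq_bounded_polyhedron)



locale pillow =
  fixes V :: "'v set" and \<tau> :: "'c::finite \<Rightarrow> 'v \<Rightarrow> 'v" and V2 :: "'u set"
    and \<tau>2 :: "'c \<Rightarrow> 'u \<Rightarrow> 'u" and \<psi> :: "'v \<Rightarrow> 'u" and i :: 'c and b b' x y :: 'v
  assumes card2: "CARD('c) \<ge> 2"
    and invV: "invol V \<tau>" and invV2: "invol V2 \<tau>2"
    and bV: "b \<in> V" "b' \<in> V"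
    and dist: "b \<noteq> b'" "x \<noteq> b" "x \<noteq> b'" "y \<noteq> b" "y \<noteq> b'" "x \<noteq> y"
    and tb: "\<And>c. c \<noteq> i \<Longrightarrow> \<tau> c b = b'" and tbi: "\<tau> i b = x" "\<tau> i b' = y"
    and psi_bij: "bij_betw \<psi> (V - {b,b'}) V2"
    and psi_hom: "\<And>u c. u \<in> V - {b,b'} \<Longrightarrow> (c = i \<Longrightarrow> u \<noteq> x \<and> u \<noteq> y) \<Longrightarrow> \<tau>2 c (\<psi> u) = \<psi> (\<tau> c u)"
    and psi_xy: "\<tau>2 i (\<psi> x) = \<psi> y" "\<tau>2 i (\<psi> y) = \<psi> x"
begin

definition nn :: real where "nn = real (card (UNIV - {i}))"
definition mm :: "real^'c \<Rightarrow> real" where "mm t = Min ((\<lambda>c. t$c) ` (UNIV - {i}))"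
definition sh :: "real \<Rightarrow> real^'c \<Rightarrow> real^'c" where
  "sh a t = (\<chi> k. if k = i then t$k + a else t$k - a / nn)"

lemma nn_eq: "nn = real CARD('c) - 1"
  unfolding nn_def using card2 by (simp add: card_Diff_singleton of_nat_diff)
lemma nn_ge1: "nn \<ge> 1" using card2 unfolding nn_eq by simp
lemma nn_pos: "nn > 0" using nn_ge1 by simp

lemma ex_other: "\<exists>c. c \<noteq> i"
proof -
  have "card (UNIV - {i}) \<noteq> 0" using card2 by (simp add: card_Diff_singleton)
  then have "UNIV - {i} \<noteq> {}" by (metis card.empty)
  then show ?thesis by blast
qed

lemma fin_img: "finite ((\<lambda>c. t$c) ` (UNIV - {i}))" "(\<lambda>c. t$c) ` (UNIV - {i}) \<noteq> {}"
  using ex_other by auto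

lemma mm_le: "c \<noteq> i \<Longrightarrow> mm t \<le> t$c"
  unfolding mm_def using fin_img by (intro Min_le) auto

lemma mm_ex: "\<exists>c. c \<noteq> i \<and> mm t = t$c"
proof -
  have "mm t \<in> (\<lambda>c. t$c) ` (UNIV - {i})" unfolding mm_def using fin_img by (rule Min_in)
  then show ?thesis by auto
qed

lemma mm_eqI: assumes "\<And>c. c \<noteq> i \<Longrightarrow> z \<le> t$c" "c0 \<noteq> i" "t$c0 = z" shows "mm t = z"
proof -
  obtain c where "c \<noteq> i" "mm t = t$c" using mm_ex by blast
  then show ?thesis using mm_le[OF assms(2), of t] assms(1)[of c] assms(3) by linarith
qed

lemma sh_i [simp]: "(sh a t)$i = t$i + a" unfolding sh_def by simp
lemma sh_c [simp]: "c \<noteq> i \<Longrightarrow> (sh a t)$c = t$c - a / nn" unfolding sh_def by simp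
lemma sh_sh [simp]: "sh a (sh a' t) = sh (a' + a) t"
  unfolding sh_def by (simp add: vec_eq_iff diff_divide_distrib add_divide_distrib algebra_simps)
lemma sh_0 [simp]: "sh 0 t = t" unfolding sh_def by (simp add: vec_eq_iff)
lemma sh_cong: "a = a' \<Longrightarrow> sh a t = sh a' t" by simp

lemma mm_sh [simp]: "mm (sh a t) = mm t - a / nn"
proof -
  obtain c0 where c0: "c0 \<noteq> i" "mm t = t$c0" using mm_ex by blast
  have "\<And>c. c \<noteq> i \<Longrightarrow> mm t - a / nn \<le> (sh a t)$c" using mm_le by simp
  moreover have "(sh a t)$c0 = mm t - a / nn" using c0 by simp
  ultimately show ?thesis using mm_eqI c0(1) by blast
qed

lemma simplex_nonneg: "t \<in> std_simplex \<Longrightarrow> 0 \<le> t$c" unfolding std_simplex_def by auto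

lemma mm_nonneg: "t \<in> std_simplex \<Longrightarrow> 0 \<le> mm t"
proof -
  assume t: "t \<in> std_simplex"
  obtain c where "c \<noteq> i" "mm t = t$c" using mm_ex by blast
  then show ?thesis using simplex_nonneg[OF t, of c] by simp
qed

lemma mm0: "t \<in> std_simplex \<Longrightarrow> c \<noteq> i \<Longrightarrow> t$c = 0 \<Longrightarrow> mm t = 0"
  using mm_le[of c t] mm_nonneg[of t] by simp

lemma sum_sh: "(\<Sum>k\<in>UNIV. (sh a t)$k) = (\<Sum>k\<in>UNIV. t$k)"
proof -
  have r: "sum g UNIV = g i + sum g (UNIV - {i})" for g :: "'c \<Rightarrow> real"
    by (rule sum.remove) auto
  have "(\<Sum>k\<in>UNIV-{i}. (sh a t)$k) = (\<Sum>k\<in>UNIV-{i}. t$k - a / nn)" by (intro sum.cong) auto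
  also have "\<dots> = (\<Sum>k\<in>UNIV-{i}. t$k) - real (card (UNIV - {i})) * (a / nn)"
    by (simp add: sum_subtractf)
  also have "real (card (UNIV - {i})) = nn" unfolding nn_def ..
  finally have "(\<Sum>k\<in>UNIV-{i}. (sh a t)$k) = (\<Sum>k\<in>UNIV-{i}. t$k) - a" using nn_pos by simp
  then show ?thesis using r[of "\<lambda>k. (sh a t)$k"] r[of "\<lambda>k. t$k"] by simp
qed

lemma sh_simplex:
  assumes "t \<in> std_simplex" "0 \<le> t$i + a" "a / nn \<le> mm t"
  shows "sh a t \<in> std_simplex"
proof -
  have "0 \<le> (sh a t)$c" for c
  proof (cases "c = i")
    case True then show ?thesis using assms by simp
  next
    case False then show ?thesis using assms mm_le[OF False, of t] by simp
  qed
  then show ?thesis using assms(1) sum_sh unfolding std_simplex_def by auto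
qed

lemma tauV: "p \<in> V \<Longrightarrow> \<tau> c p \<in> V" and tautau: "p \<in> V \<Longrightarrow> \<tau> c (\<tau> c p) = p"
  using invV unfolding invol_def by auto
lemma tau2V: "p \<in> V2 \<Longrightarrow> \<tau>2 c p \<in> V2" and tau2tau2: "p \<in> V2 \<Longrightarrow> \<tau>2 c (\<tau>2 c p) = p"
  using invV2 unfolding invol_def by auto

lemma xV: "x \<in> V" and yV: "y \<in> V"
  using tauV[OF bV(1), of i] tauV[OF bV(2), of i] tbi by auto

lemma tb': "c \<noteq> i \<Longrightarrow> \<tau> c b' = b"
  using tautau[OF bV(1), of c] tb[of c] by simp
lemma tx: "\<tau> i x = b" and ty: "\<tau> i y = b'"
  using tautau[OF bV(1), of i] tautau[OF bV(2), of i] tbi by auto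

lemma glueI: "p \<in> V \<Longrightarrow> t$c = 0 \<Longrightarrow> pt V \<tau> p t = pt V \<tau> (\<tau> c p) t"
  by (rule pt_step[OF invV]) (auto simp: glue_def)
lemma glue2I: "p \<in> V2 \<Longrightarrow> t$c = 0 \<Longrightarrow> pt V2 \<tau>2 p t = pt V2 \<tau>2 (\<tau>2 c p) t"
  by (rule pt_step[OF invV2]) (auto simp: glue_def)

lemma pt_xb: "t$i = 0 \<Longrightarrow> pt V \<tau> x t = pt V \<tau> b t"
  using glueI[OF bV(1), of t i] tbi by simp
lemma pt_b'y: "t$i = 0 \<Longrightarrow> pt V \<tau> b' t = pt V \<tau> y t"
  using glueI[OF bV(2), of t i] tbi by simp
lemma pt_bb': "t \<in> std_simplex \<Longrightarrow> mm t = 0 \<Longrightarrow> pt V \<tau> b t = pt V \<tau> b' t"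
proof -
  assume "t \<in> std_simplex" "mm t = 0"
  then obtain c where c: "c \<noteq> i" "t$c = 0" using mm_ex by metis
  then show ?thesis using glueI[OF bV(1), of t c] tb[OF c(1)] by simp
qed

lemma psi_inj: "inj_on \<psi> (V - {b,b'})" using psi_bij bij_betw_imp_inj_on by blast
lemma psi_in: "u \<in> V - {b,b'} \<Longrightarrow> \<psi> u \<in> V2" using psi_bij bij_betwE by blast
lemma xV': "x \<in> V - {b,b'}" and yV': "y \<in> V - {b,b'}" using xV yV dist by auto
lemma psix_ne: "u \<in> V - {b,b'} \<Longrightarrow> u \<noteq> x \<Longrightarrow> \<psi> u \<noteq> \<psi> x"
  using psi_inj xV' by (meson inj_on_contraD)

definition psinv where "psinv = inv_into (V - {b,b'}) \<psi>"
lemma psinv_in: "u \<in> V2 \<Longrightarrow> psinv u \<in> V - {b,b'}"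
  unfolding psinv_def using psi_bij by (metis bij_betw_def inv_into_into)
lemma psi_psinv: "u \<in> V2 \<Longrightarrow> \<psi> (psinv u) = u"
  unfolding psinv_def using psi_bij by (metis bij_betw_def f_inv_into_f)
lemma psinv_psi: "u \<in> V - {b,b'} \<Longrightarrow> psinv (\<psi> u) = u"
  unfolding psinv_def using psi_inj by simp

definition Frep :: "'v \<Rightarrow> real^'c \<Rightarrow> ('u \<times> (real^'c)) set" where
  "Frep v t = (if v = x then pt V2 \<tau>2 (\<psi> x) (sh (2*(nn*mm t)/3) t)
     else if v = b then pt V2 \<tau>2 (\<psi> x) (sh ((2*(nn*mm t) - 2*t$i)/3) t)
     else if v = b' then pt V2 \<tau>2 (\<psi> x) (sh (-2*t$i/3) t)
     else pt V2 \<tau>2 (\<psi> v) t)"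

definition Grep :: "'u \<Rightarrow> real^'c \<Rightarrow> ('v \<times> (real^'c)) set" where
  "Grep u t = (if u = \<psi> x then
       (if 2*t$i \<le> nn*mm t then pt V \<tau> b' (sh (2*t$i) t)
        else if t$i \<le> 2*(nn*mm t) then pt V \<tau> b (sh (2*(nn*mm t) - 2*t$i) t)
        else pt V \<tau> x (sh (-2*(nn*mm t)) t))
     else pt V \<tau> (psinv u) t)"

lemma Frep_stepA:
  assumes t: "t \<in> std_simplex" and p: "p \<in> {x,b,b'}" and tc: "t$c = 0"
  shows "Frep p t = Frep (\<tau> c p) t"
proof (cases "c = i")
  case True
  then have ti: "t$i = 0" using tc by simp
  consider "p = x" | "p = b" | "p = b'" using p by blast
  then show ?thesis
  proof cases
    case 1 then show ?thesis using True ti dist tx unfolding Frep_def by simp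
  next
    case 2 then show ?thesis using True ti dist tbi unfolding Frep_def by simp
  next
    case 3
    have "Frep p t = pt V2 \<tau>2 (\<psi> x) t" using 3 dist ti unfolding Frep_def by simp
    also have "\<dots> = pt V2 \<tau>2 (\<psi> y) t" using glue2I[OF psi_in[OF xV'], of t i] ti psi_xy by simp
    also have "\<dots> = Frep (\<tau> c p) t" using 3 True tbi dist unfolding Frep_def by simp
    finally show ?thesis .
  qed
next
  case False
  have m0: "mm t = 0" using mm0[OF t False tc] .
  consider "p = x" | "p = b" | "p = b'" using p by blast
  then show ?thesis
  proof cases
    case 1
    let ?s = "\<tau> c x"
    have sb: "?s \<noteq> b" using tb[OF False] tautau[OF xV, of c] dist by metis
    have sb': "?s \<noteq> b'" using tb'[OF False] tautau[OF xV, of c] dist by metis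
    show ?thesis
    proof (cases "?s = x")
      case True then show ?thesis using 1 by simp
    next
      case sx: False
      have "Frep p t = pt V2 \<tau>2 (\<psi> x) t" using 1 m0 unfolding Frep_def by simp
      also have "\<dots> = pt V2 \<tau>2 (\<tau>2 c (\<psi> x)) t" using glue2I[OF psi_in[OF xV'] tc] .
      also have "\<tau>2 c (\<psi> x) = \<psi> ?s" using psi_hom[OF xV'] False by blast
      also have "pt V2 \<tau>2 (\<psi> ?s) t = Frep (\<tau> c p) t" using 1 sx sb sb' unfolding Frep_def by simp
      finally show ?thesis .
    qed
  next
    case 2 then show ?thesis using m0 tb[OF False] dist unfolding Frep_def by simp
  next
    case 3 then show ?thesis using m0 tb'[OF False] dist unfolding Frep_def by simp
  qed
qed

lemma Frep_stepB:
  assumes p: "p \<in> V" "p \<notin> {x,b,b'}" and s: "\<tau> c p \<notin> {x,b,b'}" and tc: "t$c = 0"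
  shows "Frep p t = Frep (\<tau> c p) t"
proof -
  have pV: "p \<in> V - {b,b'}" using p by auto
  have "c = i \<Longrightarrow> p \<noteq> x \<and> p \<noteq> y" using p s ty by auto
  then have h: "\<tau>2 c (\<psi> p) = \<psi> (\<tau> c p)" using psi_hom[OF pV] by blast
  have "Frep p t = pt V2 \<tau>2 (\<psi> p) t" using p unfolding Frep_def by auto
  also have "\<dots> = pt V2 \<tau>2 (\<psi> (\<tau> c p)) t" using glue2I[OF psi_in[OF pV] tc] h by simp
  also have "\<dots> = Frep (\<tau> c p) t" using s unfolding Frep_def by auto
  finally show ?thesis .
qed

lemma Frep_step:
  assumes t: "t \<in> std_simplex" and g: "glue V \<tau> t p s"
  shows "Frep p t = Frep s t"
proof -
  from g obtain c where pV: "p \<in> V" and tc: "t$c = 0" and s: "s = \<tau> c p" unfolding glue_def by blast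
  show ?thesis
  proof (cases "p \<in> {x,b,b'}")
    case True then show ?thesis using Frep_stepA[OF t True tc] s by simp
  next
    case False
    show ?thesis
    proof (cases "s \<in> {x,b,b'}")
      case True
      have "Frep s t = Frep (\<tau> c s) t" using Frep_stepA[OF t True tc] .
      then show ?thesis using s tautau[OF pV] by simp
    next
      case False2: False
      then show ?thesis using Frep_stepB[OF pV False _ tc] s by simp
    qed
  qed
qed

lemma psix_in: "\<psi> x \<in> V2" using psi_in[OF xV'] .
lemma psiy_in: "\<psi> y \<in> V2" using psi_in[OF yV'] .
lemma psixy: "\<psi> y \<noteq> \<psi> x" using psix_ne[OF yV'] dist by auto

lemma pt_b'x: "t \<in> std_simplex \<Longrightarrow> t$i = 0 \<Longrightarrow> mm t = 0 \<Longrightarrow> pt V \<tau> b' t = pt V \<tau> x t"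
  using pt_bb' pt_xb by simp

lemma Grep_x_ti0: "t \<in> std_simplex \<Longrightarrow> t$i = 0 \<Longrightarrow> Grep (\<psi> x) t = pt V \<tau> b' t"
  using mm_nonneg[of t] nn_pos unfolding Grep_def by simp

lemma Grep_stepA:
  assumes t: "t \<in> std_simplex" and tc: "t$c = 0"
  shows "Grep (\<psi> x) t = Grep (\<tau>2 c (\<psi> x)) t"
proof (cases "c = i")
  case True
  then have ti: "t$i = 0" using tc by simp
  have "Grep (\<psi> x) t = pt V \<tau> b' t" using Grep_x_ti0[OF t ti] .
  also have "\<dots> = pt V \<tau> y t" using pt_b'y[OF ti] .
  also have "\<dots> = Grep (\<tau>2 c (\<psi> x)) t" using True psi_xy psixy psinv_psi[OF yV'] unfolding Grep_def by simp
  finally show ?thesis .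
next
  case False
  have m0: "mm t = 0" using mm0[OF t False tc] .
  let ?s = "\<tau> c x"
  have h: "\<tau>2 c (\<psi> x) = \<psi> ?s" using psi_hom[OF xV'] False by blast
  have sb: "?s \<noteq> b" using tb[OF False] tautau[OF xV, of c] dist by metis
  have sb': "?s \<noteq> b'" using tb'[OF False] tautau[OF xV, of c] dist by metis
  have sV: "?s \<in> V - {b,b'}" using tauV[OF xV] sb sb' by auto
  show ?thesis
  proof (cases "?s = x")
    case True then show ?thesis using h by simp
  next
    case sx: False
    have R: "Grep (\<tau>2 c (\<psi> x)) t = pt V \<tau> ?s t"
      using h psix_ne[OF sV sx] psinv_psi[OF sV] unfolding Grep_def by simp
    have xs: "pt V \<tau> x t = pt V \<tau> ?s t" using glueI[OF xV tc] .
    show ?thesis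
    proof (cases "t$i = 0")
      case True
      then show ?thesis using R xs Grep_x_ti0[OF t True] pt_b'x[OF t True m0] by simp
    next
      case False
      then have "t$i > 0" using simplex_nonneg[OF t, of i] by simp
      then have "Grep (\<psi> x) t = pt V \<tau> x t" using m0 unfolding Grep_def by simp
      then show ?thesis using R xs by simp
    qed
  qed
qed

lemma Grep_stepB:
  assumes p: "p \<in> V2" "p \<noteq> \<psi> x" and s: "\<tau>2 c p \<noteq> \<psi> x" and tc: "t$c = 0"
  shows "Grep p t = Grep (\<tau>2 c p) t"
proof -
  define u where "u = psinv p"
  have uV: "u \<in> V - {b,b'}" using psinv_in[OF p(1)] u_def by simp
  have pu: "p = \<psi> u" using psi_psinv[OF p(1)] u_def by simp
  have ux: "u \<noteq> x" using p(2) pu by auto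
  have "c = i \<Longrightarrow> u \<noteq> y" using s pu psi_xy by auto
  then have h: "\<tau>2 c p = \<psi> (\<tau> c u)" using psi_hom[OF uV] ux pu by blast
  have tu: "\<tau> c u \<in> V - {b,b'}"
  proof -
    have "\<tau> c u \<noteq> b"
    proof
      assume "\<tau> c u = b"
      then have "u = \<tau> c b" using tautau uV by force
      then show False using uV ux tb tbi by (cases "c = i") auto
    qed
    moreover have "\<tau> c u \<noteq> b'"
    proof
      assume "\<tau> c u = b'"
      then have e: "u = \<tau> c b'" using tautau uV by force
      show False
      proof (cases "c = i")
        case True then show False using e tbi \<open>c = i \<Longrightarrow> u \<noteq> y\<close> by auto
      next
        case False then show False using e tb' uV by auto
      qed
    qed
    ultimately show ?thesis using tauV uV by auto
  qed
  have "Grep p t = pt V \<tau> u t" using p(2) unfolding Grep_def u_def by simp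
  also have "\<dots> = pt V \<tau> (\<tau> c u) t" using glueI uV tc by auto
  also have "\<dots> = Grep (\<tau>2 c p) t" using s h psinv_psi[OF tu] unfolding Grep_def by simp
  finally show ?thesis .
qed

lemma Grep_step:
  assumes t: "t \<in> std_simplex" and g: "glue V2 \<tau>2 t p s"
  shows "Grep p t = Grep s t"
proof -
  from g obtain c where pV: "p \<in> V2" and tc: "t$c = 0" and s: "s = \<tau>2 c p" unfolding glue_def by blast
  show ?thesis
  proof (cases "p = \<psi> x")
    case True then show ?thesis using Grep_stepA[OF t tc] s by simp
  next
    case False
    show ?thesis
    proof (cases "s = \<psi> x")
      case True
      have "Grep s t = Grep (\<tau>2 c s) t" using Grep_stepA[OF t tc] True by simp
      then show ?thesis using s tau2tau2[OF pV] by simp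
    next
      case False2: False
      then show ?thesis using Grep_stepB[OF pV False _ tc] s by simp
    qed
  qed
qed

lemma GB1: "t \<in> std_simplex \<Longrightarrow> 2*t$i \<le> nn*mm t \<Longrightarrow> Grep (\<psi> x) t = pt V \<tau> b' (sh (2*t$i) t)"
  unfolding Grep_def by simp

lemma GB2:
  assumes t: "t \<in> std_simplex" and h1: "nn*mm t \<le> 2*t$i" and h2: "t$i \<le> 2*(nn*mm t)"
  shows "Grep (\<psi> x) t = pt V \<tau> b (sh (2*(nn*mm t) - 2*t$i) t)"
proof (cases "2*t$i \<le> nn*mm t")
  case True
  then have e: "2*t$i = nn*mm t" using h1 by simp
  let ?t = "sh (2*t$i) t"
  have d: "2*t$i / nn = mm t" unfolding e using nn_pos by simp
  have st: "?t \<in> std_simplex"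
    by (rule sh_simplex[OF t]) (use simplex_nonneg[OF t, of i] d in auto)
  have m: "mm ?t = 0" using d by simp
  have "Grep (\<psi> x) t = pt V \<tau> b' ?t" using True unfolding Grep_def by simp
  also have "\<dots> = pt V \<tau> b ?t" using pt_bb'[OF st m] by simp
  also have "2*t$i = 2*(nn*mm t) - 2*t$i" using e by simp
  finally show ?thesis .
next
  case False then show ?thesis using h2 unfolding Grep_def by simp
qed

lemma GB3:
  assumes t: "t \<in> std_simplex" and h: "2*(nn*mm t) \<le> t$i"
  shows "Grep (\<psi> x) t = pt V \<tau> x (sh (-2*(nn*mm t)) t)"
proof -
  have m: "0 \<le> mm t" using mm_nonneg[OF t] .
  show ?thesis
  proof (cases "2*t$i \<le> nn*mm t")
    case True
    have nm: "0 \<le> nn * mm t" using m nn_pos by simp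
    then have "nn * mm t = 0" using True h by linarith
    then have "mm t = 0" "t$i = 0" using nn_pos True simplex_nonneg[OF t, of i] by auto
    then show ?thesis using True pt_b'x[OF t] unfolding Grep_def by simp
  next
    case False
    show ?thesis
    proof (cases "t$i \<le> 2*(nn*mm t)")
      case True
      then have e: "t$i = 2*(nn*mm t)" using h by simp
      let ?t = "sh (-2*(nn*mm t)) t"
      have ti: "?t$i = 0" using e by simp
      have "Grep (\<psi> x) t = pt V \<tau> b (sh (2*(nn*mm t) - 2*t$i) t)" using False True unfolding Grep_def by simp
      also have "2*(nn*mm t) - 2*t$i = -2*(nn*mm t)" using e by simp
      also have "pt V \<tau> b ?t = pt V \<tau> x ?t" using pt_xb[OF ti] by simp
      finally show ?thesis .
    next
      case False2: False
      then show ?thesis using False unfolding Grep_def by simp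
    qed
  qed
qed

end


context pillow begin

declare mm_sh [simp del]

lemma nmm_sh [simp]: "nn * mm (sh a t) = nn * mm t - a"
  using nn_pos by (simp add: mm_sh right_diff_distrib)

lemma nmm_nonneg: "t \<in> std_simplex \<Longrightarrow> 0 \<le> nn * mm t"
  using mm_nonneg nn_pos by simp

lemma sh_id: "a = 0 \<Longrightarrow> sh a t = t" by simp

lemma sh_simplex':
  assumes "t \<in> std_simplex" "0 \<le> t$i + a" "a \<le> nn * mm t"
  shows "sh a t \<in> std_simplex"
proof (rule sh_simplex[OF assms(1,2)])
  show "a / nn \<le> mm t" using assms(3) nn_pos by (simp add: pos_divide_le_eq mult.commute)
qed

lemma inR: "v \<in> V \<Longrightarrow> t \<in> std_simplex \<Longrightarrow> pt V \<tau> v t \<in> realization V \<tau>"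
  unfolding realization_def by blast
lemma inR2: "v \<in> V2 \<Longrightarrow> t \<in> std_simplex \<Longrightarrow> pt V2 \<tau>2 v t \<in> realization V2 \<tau>2"
  unfolding realization_def by blast

lemma Frep_in: assumes v: "v \<in> V" and t: "t \<in> std_simplex" shows "Frep v t \<in> realization V2 \<tau>2"
proof -
  have N: "0 \<le> nn * mm t" using nmm_nonneg[OF t] .
  have ti: "0 \<le> t$i" using simplex_nonneg[OF t] .
  show ?thesis
  proof (cases "v \<in> {x,b,b'}")
    case True
    have s1: "sh (2*(nn*mm t)/3) t \<in> std_simplex" by (rule sh_simplex'[OF t]) (use N ti in auto)
    have s2: "sh ((2*(nn*mm t) - 2*t$i)/3) t \<in> std_simplex" by (rule sh_simplex'[OF t]) (use N ti in \<open>simp_all add: field_simps\<close>)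
    have s3: "sh (-2*t$i/3) t \<in> std_simplex" by (rule sh_simplex'[OF t]) (use N ti in auto)
    show ?thesis using True inR2[OF psix_in] s1 s2 s3 unfolding Frep_def by auto
  next
    case False
    then show ?thesis using inR2[OF psi_in t] v unfolding Frep_def by auto
  qed
qed

lemma Grep_in: assumes u: "u \<in> V2" and t: "t \<in> std_simplex" shows "Grep u t \<in> realization V \<tau>"
proof -
  have N: "0 \<le> nn * mm t" using nmm_nonneg[OF t] .
  have ti: "0 \<le> t$i" using simplex_nonneg[OF t] .
  show ?thesis
  proof (cases "u = \<psi> x")
    case True
    show ?thesis
    proof (cases "2*t$i \<le> nn*mm t")
      case c1: True
      have "sh (2*t$i) t \<in> std_simplex" by (rule sh_simplex'[OF t]) (use N ti c1 in auto)
      then show ?thesis using True c1 inR[OF bV(2)] unfolding Grep_def by simp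
    next
      case c1: False
      show ?thesis
      proof (cases "t$i \<le> 2*(nn*mm t)")
        case c2: True
        have "sh (2*(nn*mm t) - 2*t$i) t \<in> std_simplex" by (rule sh_simplex'[OF t]) (use N ti c1 c2 in auto)
        then show ?thesis using True c1 c2 inR[OF bV(1)] unfolding Grep_def by simp
      next
        case c2: False
        have "sh (-2*(nn*mm t)) t \<in> std_simplex" by (rule sh_simplex'[OF t]) (use N ti c1 c2 in auto)
        then show ?thesis using True c1 c2 inR[OF xV] unfolding Grep_def by simp
      qed
    qed
  next
    case False
    then show ?thesis using inR[OF _ t] psinv_in[OF u] unfolding Grep_def by auto
  qed
qed

definition ff where "ff = cfun Frep"
definition gg where "gg = cfun Grep"

lemma ff_pt: "t \<in> std_simplex \<Longrightarrow> ff (pt V \<tau> v t) = Frep v t"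
  unfolding ff_def by (rule cfun_pt) (rule Frep_step)
lemma gg_pt: "t \<in> std_simplex \<Longrightarrow> gg (pt V2 \<tau>2 u t) = Grep u t"
  unfolding gg_def by (rule cfun_pt) (rule Grep_step)

lemma GF: assumes v: "v \<in> V" and t: "t \<in> std_simplex" shows "gg (Frep v t) = pt V \<tau> v t"
proof -
  have N: "0 \<le> nn * mm t" using nmm_nonneg[OF t] .
  have ti: "0 \<le> t$i" using simplex_nonneg[OF t] .
  consider "v = x" | "v = b" | "v = b'" | "v \<notin> {x,b,b'}" by blast
  then show ?thesis
  proof cases
    case 1
    let ?t = "sh (2*(nn*mm t)/3) t"
    have st: "?t \<in> std_simplex" by (rule sh_simplex'[OF t]) (use N ti in auto)
    have "gg (Frep v t) = Grep (\<psi> x) ?t" using 1 gg_pt[OF st] unfolding Frep_def by simp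
    also have "\<dots> = pt V \<tau> x (sh (-2*(nn*mm ?t)) ?t)" by (rule GB3[OF st]) (use ti in simp)
    also have "sh (-2*(nn*mm ?t)) ?t = t" by simp
    finally show ?thesis using 1 by simp
  next
    case 2
    let ?t = "sh ((2*(nn*mm t) - 2*t$i)/3) t"
    have st: "?t \<in> std_simplex" by (rule sh_simplex'[OF t]) (use N ti in \<open>simp_all add: field_simps\<close>)
    have "gg (Frep v t) = Grep (\<psi> x) ?t" using 2 dist gg_pt[OF st] unfolding Frep_def by simp
    also have "\<dots> = pt V \<tau> b (sh (2*(nn*mm ?t) - 2*?t$i) ?t)" by (rule GB2[OF st]) (use ti N in \<open>simp_all add: field_simps\<close>)
    also have "sh (2*(nn*mm ?t) - 2*?t$i) ?t = t" by (simp add: sh_id field_simps)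
    finally show ?thesis using 2 by simp
  next
    case 3
    let ?t = "sh (-2*t$i/3) t"
    have st: "?t \<in> std_simplex" by (rule sh_simplex'[OF t]) (use N ti in auto)
    have "gg (Frep v t) = Grep (\<psi> x) ?t" using 3 dist gg_pt[OF st] unfolding Frep_def by simp
    also have "\<dots> = pt V \<tau> b' (sh (2*?t$i) ?t)" by (rule GB1[OF st]) (use ti N in simp)
    also have "sh (2*?t$i) ?t = t" by simp
    finally show ?thesis using 3 by simp
  next
    case 4
    then have vV: "v \<in> V - {b,b'}" using v by auto
    have "gg (Frep v t) = Grep (\<psi> v) t" using 4 gg_pt[OF t] unfolding Frep_def by simp
    also have "\<dots> = pt V \<tau> v t" using psix_ne[OF vV] 4 psinv_psi[OF vV] unfolding Grep_def by simp
    finally show ?thesis .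
  qed
qed

lemma FG: assumes u: "u \<in> V2" and t: "t \<in> std_simplex" shows "ff (Grep u t) = pt V2 \<tau>2 u t"
proof -
  have N: "0 \<le> nn * mm t" using nmm_nonneg[OF t] .
  have ti: "0 \<le> t$i" using simplex_nonneg[OF t] .
  show ?thesis
  proof (cases "u = \<psi> x")
    case True
    show ?thesis
    proof (cases "2*t$i \<le> nn*mm t")
      case c1: True
      let ?t = "sh (2*t$i) t"
      have st: "?t \<in> std_simplex" by (rule sh_simplex'[OF t]) (use N ti c1 in auto)
      have "ff (Grep u t) = Frep b' ?t" using True c1 ff_pt[OF st] unfolding Grep_def by simp
      also have "\<dots> = pt V2 \<tau>2 (\<psi> x) (sh (-2*?t$i/3) ?t)" using dist unfolding Frep_def by simp
      also have "sh (-2*?t$i/3) ?t = t" by simp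
      finally show ?thesis using True by simp
    next
      case c1: False
      show ?thesis
      proof (cases "t$i \<le> 2*(nn*mm t)")
        case c2: True
        let ?t = "sh (2*(nn*mm t) - 2*t$i) t"
        have st: "?t \<in> std_simplex" by (rule sh_simplex'[OF t]) (use N ti c1 c2 in auto)
        have "ff (Grep u t) = Frep b ?t" using True c1 c2 ff_pt[OF st] unfolding Grep_def by simp
        also have "\<dots> = pt V2 \<tau>2 (\<psi> x) (sh ((2*(nn*mm ?t) - 2*?t$i)/3) ?t)" using dist unfolding Frep_def by simp
        also have "sh ((2*(nn*mm ?t) - 2*?t$i)/3) ?t = t" by (simp add: sh_id field_simps)
        finally show ?thesis using True by simp
      next
        case c2: False
        let ?t = "sh (-2*(nn*mm t)) t"
        have st: "?t \<in> std_simplex" by (rule sh_simplex'[OF t]) (use N ti c1 c2 in auto)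
        have "ff (Grep u t) = Frep x ?t" using True c1 c2 ff_pt[OF st] unfolding Grep_def by simp
        also have "\<dots> = pt V2 \<tau>2 (\<psi> x) (sh (2*(nn*mm ?t)/3) ?t)" unfolding Frep_def by simp
        also have "sh (2*(nn*mm ?t)/3) ?t = t" by simp
        finally show ?thesis using True by simp
      qed
    qed
  next
    case False
    define v where "v = psinv u"
    have vV: "v \<in> V - {b,b'}" using psinv_in[OF u] v_def by simp
    have vx: "v \<noteq> x" using False psi_psinv[OF u] v_def by auto
    have "ff (Grep u t) = Frep v t" using False ff_pt[OF t] unfolding Grep_def v_def by simp
    also have "\<dots> = pt V2 \<tau>2 u t" using vV vx psi_psinv[OF u] unfolding Frep_def v_def by auto
    finally show ?thesis .
  qed
qed

end


lemma pt_eq_t: "pt V \<tau> u t = pt V \<tau> u' t' \<Longrightarrow> t = t'"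
proof -
  assume e: "pt V \<tau> u t = pt V \<tau> u' t'"
  have "(u, t) \<in> pt V \<tau> u t" unfolding pt_def by auto
  then have "(u, t) \<in> pt V \<tau> u' t'" using e by simp
  then show ?thesis unfolding pt_def by auto
qed

context pillow begin

definition dd :: "real^'c" where "dd = (\<chi> k. if k = i then 1 else - 1 / nn)"

lemma sh_lin: "sh a t = t + a *\<^sub>R dd"
  unfolding sh_def dd_def by (simp add: vec_eq_iff)

lemma lin_map: "linear (\<lambda>t::real^'c. t + (k1 * t$c + k2 * t$i) *\<^sub>R dd)"
  by (rule linearI) (simp_all add: algebra_simps scaleR_add_left)

lemma affine_sh: "\<exists>A b. linear A \<and> (\<forall>t\<in>K. sh (k1 * t$c + k2 * t$i) t = A t + b)"
  by (intro exI[of _ "\<lambda>t::real^'c. t + (k1 * t$c + k2 * t$i) *\<^sub>R dd"] exI[of _ 0])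
     (simp add: lin_map sh_lin)

lemma affine_id: "\<exists>A b. linear A \<and> (\<forall>t\<in>K. (t::real^'c) = A t + b)"
  by (intro exI[of _ "\<lambda>t::real^'c. t"] exI[of _ 0]) (simp add: linear_id[unfolded id_def])

definition PC :: "'c \<Rightarrow> real \<Rightarrow> real \<Rightarrow> real \<Rightarrow> real \<Rightarrow> (real^'c) set" where
  "PC c k1 k2 k3 k4 = std_simplex \<inter> {t. \<forall>c'. c' \<noteq> i \<longrightarrow> t$c \<le> t$c'}
     \<inter> {t::real^'c. k1 * t$i \<le> k2 * t$c} \<inter> {t. k3 * t$i \<le> k4 * t$c}"

lemma PC_hull: "\<exists>F. finite F \<and> (if c = i then {} else PC c k1 k2 k3 k4) = convex hull F"
  using polytope_piece[of i c k1 k2 k3 k4] unfolding PC_def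
  by (cases "c = i") (auto intro: exI[of _ "{}"])

lemma PC_mm: "t \<in> PC c k1 k2 k3 k4 \<Longrightarrow> c \<noteq> i \<Longrightarrow> mm t = t$c"
  unfolding PC_def by (rule mm_eqI) auto

lemma PC_simplex: "t \<in> PC c k1 k2 k3 k4 \<Longrightarrow> t \<in> std_simplex"
  unfolding PC_def by auto

lemma mm_min: "t \<in> std_simplex \<Longrightarrow> \<exists>c. c \<noteq> i \<and> mm t = t$c \<and> t \<in> PC c 0 0 0 0"
proof -
  assume t: "t \<in> std_simplex"
  obtain c where c: "c \<noteq> i" "mm t = t$c" using mm_ex by blast
  have "\<forall>c'. c' \<noteq> i \<longrightarrow> t$c \<le> t$c'" using mm_le c(2) by metis
  then have "t \<in> PC c 0 0 0 0" unfolding PC_def using t by simp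
  then show ?thesis using c by blast
qed

lemma enum: "\<exists>e::nat \<Rightarrow> 'c. bij_betw e {..<CARD('c)} UNIV"
  using ex_bij_betw_nat_finite[of "UNIV :: 'c set"] by (simp add: atLeast0LessThan)

lemma PL_ff: "PL_map V \<tau> V2 \<tau>2 ff"
proof -
  obtain e :: "nat \<Rightarrow> 'c" where e: "bij_betw e {..<CARD('c)} UNIV" using enum by blast
  have img: "ff ` realization V \<tau> \<subseteq> realization V2 \<tau>2"
  proof
    fix Q assume "Q \<in> ff ` realization V \<tau>"
    then obtain v t where "v \<in> V" "t \<in> std_simplex" "Q = ff (pt V \<tau> v t)"
      unfolding realization_def by blast
    then show "Q \<in> realization V2 \<tau>2" using ff_pt Frep_in by simp
  qed
  have pieces: "\<exists>(n::nat) (K :: nat \<Rightarrow> (real^'c) set) (u :: nat \<Rightarrow> 'u)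
                 (L :: nat \<Rightarrow> real^'c \<Rightarrow> real^'c).
        (\<Union>j<n. K j) = std_simplex \<and>
        (\<forall>j<n. (\<exists>F. finite F \<and> K j = convex hull F) \<and> u j \<in> V2 \<and>
           (\<exists>A b. linear A \<and> (\<forall>t\<in>K j. L j t = A t + b)) \<and>
           (\<forall>t\<in>K j. L j t \<in> std_simplex \<and>
              ff (pt V \<tau> v t) = pt V2 \<tau>2 (u j) (L j t)))" if v: "v \<in> V" for v
  proof (cases "v \<in> {x,b,b'}")
    case False
    have "(\<Union>j<1::nat. (\<lambda>j. std_simplex) j) = (std_simplex :: (real^'c) set)" by auto
    moreover have "\<forall>j<1::nat. (\<exists>F. finite F \<and> (std_simplex :: (real^'c) set) = convex hull F) \<and> \<psi> v \<in> V2 \<and>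
           (\<exists>A b. linear A \<and> (\<forall>t::real^'c\<in>std_simplex. t = A t + b)) \<and>
           (\<forall>t::real^'c\<in>std_simplex. t \<in> std_simplex \<and>
              ff (pt V \<tau> v t) = pt V2 \<tau>2 (\<psi> v) t)"
    proof (intro allI impI conjI ballI)
      show "\<exists>F. finite F \<and> (std_simplex :: (real^'c) set) = convex hull F" by (rule polytope_simplex)
      show "\<psi> v \<in> V2" using psi_in v False by auto
      show "\<exists>A b. linear A \<and> (\<forall>t::real^'c\<in>std_simplex. t = A t + b)"
        by (intro exI[of _ "\<lambda>t::real^'c. t"] exI[of _ 0]) (simp add: linear_id[unfolded id_def])
      fix t :: "real^'c" assume t: "t \<in> std_simplex"
      then show "t \<in> std_simplex" .
      show "ff (pt V \<tau> v t) = pt V2 \<tau>2 (\<psi> v) t" using ff_pt[OF t] False unfolding Frep_def by auto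
    qed
    ultimately show ?thesis
      by (intro exI[of _ "1::nat"] exI[of _ "\<lambda>j. std_simplex"] exI[of _ "\<lambda>j. \<psi> v"]
          exI[of _ "\<lambda>j t. t"]) simp
  next
    case True
    define k1 :: real where "k1 = (if v = b' then 0 else 2*nn/3)"
    define k2 :: real where "k2 = (if v = x then 0 else - 2/3)"
    define K where "K = (\<lambda>j. if e j = i then {} else PC (e j) 0 0 0 0)"
    define L where "L = (\<lambda>j t. sh (k1 * t$(e j) + k2 * t$i) t)"
    have cover: "(\<Union>j<CARD('c). K j) = std_simplex"
    proof
      show "(\<Union>j<CARD('c). K j) \<subseteq> std_simplex" unfolding K_def using PC_simplex by auto
      show "std_simplex \<subseteq> (\<Union>j<CARD('c). K j)"
      proof
        fix t :: "real^'c" assume t: "t \<in> std_simplex"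
        obtain c where c: "c \<noteq> i" "t \<in> PC c 0 0 0 0" using mm_min[OF t] by blast
        have "c \<in> e ` {..<CARD('c)}" using e unfolding bij_betw_def by simp
        then obtain j where j: "j < CARD('c)" "e j = c" by auto
        show "t \<in> (\<Union>j<CARD('c). K j)" using j c unfolding K_def by auto
      qed
    qed
    have main: "L j t \<in> std_simplex \<and> ff (pt V \<tau> v t) = pt V2 \<tau>2 (\<psi> x) (L j t)" if "t \<in> K j" for j t
    proof -
      have ne: "e j \<noteq> i" and tP: "t \<in> PC (e j) 0 0 0 0" using that unfolding K_def by (auto split: if_splits)
      have t: "t \<in> std_simplex" using PC_simplex[OF tP] .
      have m: "mm t = t$(e j)" using PC_mm[OF tP ne] .
      have eq: "ff (pt V \<tau> v t) = pt V2 \<tau>2 (\<psi> x) (L j t)"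
        using True dist unfolding ff_pt[OF t] Frep_def L_def k1_def k2_def m
        by (auto intro!: arg_cong[where f="pt V2 \<tau>2 (\<psi> x)"] sh_cong simp: field_simps)
      have "ff (pt V \<tau> v t) \<in> realization V2 \<tau>2" using ff_pt[OF t] Frep_in[OF v t] by simp
      then obtain u' t' where "pt V2 \<tau>2 (\<psi> x) (L j t) = pt V2 \<tau>2 u' t'" "t' \<in> std_simplex"
        unfolding realization_def eq by blast
      then have "L j t \<in> std_simplex"
        using pt_eq_t by metis
      then show ?thesis using eq by simp
    qed
    show ?thesis
      apply (intro exI[of _ "CARD('c)"] exI[of _ K] exI[of _ "\<lambda>j. \<psi> x"] exI[of _ L] conjI cover allI impI)
      subgoal for j unfolding K_def by (rule PC_hull)
      subgoal using psix_in .
      subgoal for j unfolding L_def by (rule affine_sh)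
      subgoal for j using main by blast
      done
  qed
  show ?thesis unfolding PL_map_def using img pieces by blast
qed

end


context pillow begin

lemma PL_gg: "PL_map V2 \<tau>2 V \<tau> gg"
proof -
  obtain e :: "nat \<Rightarrow> 'c" where e: "bij_betw e {..<CARD('c)} UNIV" using enum by blast
  define N where "N = CARD('c)"
  have N0: "0 < N" unfolding N_def by simp
  have img: "gg ` realization V2 \<tau>2 \<subseteq> realization V \<tau>"
  proof
    fix Q assume "Q \<in> gg ` realization V2 \<tau>2"
    then obtain v t where "v \<in> V2" "t \<in> std_simplex" "Q = gg (pt V2 \<tau>2 v t)"
      unfolding realization_def by blast
    then show "Q \<in> realization V \<tau>" using gg_pt Grep_in by simp
  qed
  have pieces: "\<exists>(n::nat) (K :: nat \<Rightarrow> (real^'c) set) (u :: nat \<Rightarrow> 'v)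
                 (L :: nat \<Rightarrow> real^'c \<Rightarrow> real^'c).
        (\<Union>j<n. K j) = std_simplex \<and>
        (\<forall>j<n. (\<exists>F. finite F \<and> K j = convex hull F) \<and> u j \<in> V \<and>
           (\<exists>A b. linear A \<and> (\<forall>t\<in>K j. L j t = A t + b)) \<and>
           (\<forall>t\<in>K j. L j t \<in> std_simplex \<and>
              gg (pt V2 \<tau>2 v t) = pt V \<tau> (u j) (L j t)))" if v: "v \<in> V2" for v
  proof (cases "v = \<psi> x")
    case False
    have "(\<Union>j<1::nat. (\<lambda>j. std_simplex) j) = (std_simplex :: (real^'c) set)" by auto
    moreover have "\<forall>j<1::nat. (\<exists>F. finite F \<and> (std_simplex :: (real^'c) set) = convex hull F) \<and> psinv v \<in> V \<and>
           (\<exists>A b. linear A \<and> (\<forall>t::real^'c\<in>std_simplex. t = A t + b)) \<and>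
           (\<forall>t::real^'c\<in>std_simplex. t \<in> std_simplex \<and>
              gg (pt V2 \<tau>2 v t) = pt V \<tau> (psinv v) t)"
    proof (intro allI impI conjI ballI)
      show "\<exists>F. finite F \<and> (std_simplex :: (real^'c) set) = convex hull F" by (rule polytope_simplex)
      show "psinv v \<in> V" using psinv_in[OF v] by auto
      show "\<exists>A b. linear A \<and> (\<forall>t::real^'c\<in>std_simplex. t = A t + b)"
        by (intro exI[of _ "\<lambda>t::real^'c. t"] exI[of _ 0]) (simp add: linear_id[unfolded id_def])
      fix t :: "real^'c" assume t: "t \<in> std_simplex"
      then show "t \<in> std_simplex" .
      show "gg (pt V2 \<tau>2 v t) = pt V \<tau> (psinv v) t" using gg_pt[OF t] False unfolding Grep_def by auto
    qed
    ultimately show ?thesis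
      by (intro exI[of _ "1::nat"] exI[of _ "\<lambda>j. std_simplex"] exI[of _ "\<lambda>j. psinv v"]
          exI[of _ "\<lambda>j t. t"]) simp
  next
    case True
    define R1 :: "nat \<Rightarrow> real" where "R1 r = (if r = 0 then 2 else if r = 1 then -2 else -1)" for r
    define R2 :: "nat \<Rightarrow> real" where "R2 r = (if r = 0 then nn else if r = 1 then -nn else -2*nn)" for r
    define R3 :: "nat \<Rightarrow> real" where "R3 r = (if r = 1 then 1 else 0)" for r
    define R4 :: "nat \<Rightarrow> real" where "R4 r = (if r = 1 then 2*nn else 0)" for r
    define U where "U r = (if r = 0 then b' else if r = 1 then b else x)" for r :: nat
    define A1 :: "nat \<Rightarrow> real" where "A1 r = (if r = 0 then 0 else if r = 1 then 2*nn else -2*nn)" for r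
    define A2 :: "nat \<Rightarrow> real" where "A2 r = (if r = 0 then 2 else if r = 1 then -2 else 0)" for r
    define K where "K = (\<lambda>j. if e (j mod N) = i then {}
        else PC (e (j mod N)) (R1 (j div N)) (R2 (j div N)) (R3 (j div N)) (R4 (j div N)))"
    define L where "L = (\<lambda>j t. sh (A1 (j div N) * t$(e (j mod N)) + A2 (j div N) * t$i) t)"
    have cover: "(\<Union>j<3*N. K j) = std_simplex"
    proof
      show "(\<Union>j<3*N. K j) \<subseteq> std_simplex"
      proof
        fix t assume "t \<in> (\<Union>j<3*N. K j)"
        then obtain j where "t \<in> K j" by blast
        then show "t \<in> std_simplex" unfolding K_def using PC_simplex by (auto split: if_splits)
      qed
      show "std_simplex \<subseteq> (\<Union>j<3*N. K j)"
      proof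
        fix t :: "real^'c" assume t: "t \<in> std_simplex"
        obtain c where c: "c \<noteq> i" "mm t = t$c" "t \<in> PC c 0 0 0 0" using mm_min[OF t] by blast
        have "c \<in> e ` {..<CARD('c)}" using e unfolding bij_betw_def by simp
        then obtain j0 where j0: "j0 < N" "e j0 = c" unfolding N_def by auto
        have md: "(r*N + j0) mod N = j0" "(r*N + j0) div N = r" for r
        proof -
          have "(j0 + r*N) mod N = j0" "(j0 + r*N) div N = r" using j0(1) N0 by simp_all
          then show "(r*N + j0) mod N = j0" "(r*N + j0) div N = r" by (simp_all only: add.commute)
        qed
        have lt: "r*N + j0 < 3*N" if "r \<le> 2" for r
        proof -
          have "r*N \<le> 2*N" using mult_right_mono[OF that, of N] by simp
          then show ?thesis using j0 by linarith
        qed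
        have base: "t \<in> std_simplex \<and> (\<forall>c'. c' \<noteq> i \<longrightarrow> t$c \<le> t$c')" using c(3) unfolding PC_def by blast
        have KK: "K (r*N + j0) = PC c (R1 r) (R2 r) (R3 r) (R4 r)" for r
          unfolding K_def md j0(2) using c(1) by simp
        have "\<exists>r\<le>2. t \<in> PC c (R1 r) (R2 r) (R3 r) (R4 r)"
        proof (cases "2*t$i \<le> nn*t$c")
          case True
          then have "t \<in> PC c (R1 0) (R2 0) (R3 0) (R4 0)" using base
            unfolding PC_def R1_def R2_def R3_def R4_def by simp
          then show ?thesis by (intro exI[of _ "0::nat"]) simp
        next
          case F1: False
          show ?thesis
          proof (cases "t$i \<le> 2*nn*t$c")
            case True
            then have "t \<in> PC c (R1 1) (R2 1) (R3 1) (R4 1)" using F1 base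
              unfolding PC_def R1_def R2_def R3_def R4_def by simp
            then show ?thesis by (intro exI[of _ "1::nat"]) simp
          next
            case False
            then have "t \<in> PC c (R1 2) (R2 2) (R3 2) (R4 2)" using F1 base
              unfolding PC_def R1_def R2_def R3_def R4_def by simp
            then show ?thesis by (intro exI[of _ "2::nat"]) simp
          qed
        qed
        then have "\<exists>r\<le>2. t \<in> K (r*N + j0)" unfolding KK .
        then obtain r where r: "r \<le> 2" "t \<in> K (r*N + j0)" by (elim exE conjE)
        have "r*N + j0 \<in> {..<3*N}" using lt[OF r(1)] by simp
        then show "t \<in> (\<Union>j<3*N. K j)" using r(2) by (rule UN_I)
      qed
    qed
    have main: "L j t \<in> std_simplex \<and> gg (pt V2 \<tau>2 v t) = pt V \<tau> (U (j div N)) (L j t)" if "t \<in> K j" for j t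
    proof -
      define c where "c = e (j mod N)"
      define r where "r = j div N"
      have ne: "c \<noteq> i" and tP: "t \<in> PC c (R1 r) (R2 r) (R3 r) (R4 r)"
        using that unfolding K_def c_def r_def by (auto split: if_splits)
      have t: "t \<in> std_simplex" using PC_simplex[OF tP] .
      have m: "mm t = t$c" using PC_mm[OF tP ne] .
      have cond: "R1 r * t$i \<le> R2 r * t$c" "R3 r * t$i \<le> R4 r * t$c" using tP unfolding PC_def by auto
      have Lj: "L j t = sh (A1 r * t$c + A2 r * t$i) t" unfolding L_def c_def r_def ..
      have eq: "gg (pt V2 \<tau>2 v t) = pt V \<tau> (U r) (L j t)"
      proof -
        have g: "gg (pt V2 \<tau>2 v t) = Grep (\<psi> x) t" using gg_pt[OF t] True by simp
        consider "r = 0" | "r = 1" | "r \<noteq> 0" "r \<noteq> 1" by blast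
        then show ?thesis
        proof cases
          case 1
          have "Grep (\<psi> x) t = pt V \<tau> b' (sh (2*t$i) t)"
            by (rule GB1[OF t]) (use cond 1 m in \<open>simp add: R1_def R2_def\<close>)
          then show ?thesis using g 1 unfolding Lj U_def A1_def A2_def by simp
        next
          case 2
          have "Grep (\<psi> x) t = pt V \<tau> b (sh (2*(nn*mm t) - 2*t$i) t)"
            by (rule GB2[OF t]) (use cond 2 m in \<open>simp_all add: R1_def R2_def R3_def R4_def\<close>)
          then show ?thesis using g 2 m unfolding Lj U_def A1_def A2_def by (simp add: algebra_simps)
        next
          case 3
          have "Grep (\<psi> x) t = pt V \<tau> x (sh (-2*(nn*mm t)) t)"
            by (rule GB3[OF t]) (use cond 3 m in \<open>simp add: R1_def R2_def\<close>)
          then show ?thesis using g 3 m unfolding Lj U_def A1_def A2_def by (simp add: algebra_simps)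
        qed
      qed
      have "gg (pt V2 \<tau>2 v t) \<in> realization V \<tau>" using gg_pt[OF t] Grep_in[OF v t] by simp
      then obtain u' t' where "pt V \<tau> (U r) (L j t) = pt V \<tau> u' t'" "t' \<in> std_simplex"
        unfolding realization_def eq by blast
      then have "L j t \<in> std_simplex" using pt_eq_t by metis
      then show ?thesis using eq unfolding r_def by simp
    qed
    have UV: "U r \<in> V" for r unfolding U_def using bV xV by auto
    show ?thesis
      apply (intro exI[of _ "3*N"] exI[of _ K] exI[of _ "\<lambda>j. U (j div N)"] exI[of _ L] conjI cover allI impI)
      subgoal for j unfolding K_def by (rule PC_hull)
      subgoal using UV .
      subgoal for j unfolding L_def by (rule affine_sh)
      subgoal for j using main by blast
      done
  qed
  show ?thesis unfolding PL_map_def using img pieces by blast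
qed

theorem pillow_homeo: "PL_homeomorphic V \<tau> V2 \<tau>2"
proof (rule PL_homeo_intro[OF PL_ff PL_gg])
  show "\<forall>P\<in>realization V \<tau>. gg (ff P) = P"
  proof
    fix P assume "P \<in> realization V \<tau>"
    then obtain v t where "v \<in> V" "t \<in> std_simplex" "P = pt V \<tau> v t" unfolding realization_def by blast
    then show "gg (ff P) = P" using ff_pt GF by simp
  qed
  show "\<forall>Q\<in>realization V2 \<tau>2. ff (gg Q) = Q"
  proof
    fix Q assume "Q \<in> realization V2 \<tau>2"
    then obtain v t where "v \<in> V2" "t \<in> std_simplex" "Q = pt V2 \<tau>2 v t" unfolding realization_def by blast
    then show "ff (gg Q) = Q" using gg_pt FG by simp
  qed
qed

end


lemma Gq_facts:
  assumes "Gq V \<sigma> r"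
  shows "finite V" "r \<in> V" "\<And>a x. x \<in> V \<Longrightarrow> \<sigma> a x \<in> V" "\<And>a x. x \<in> V \<Longrightarrow> \<sigma> a x \<noteq> x"
    "\<And>a x. x \<in> V \<Longrightarrow> \<sigma> a (\<sigma> a x) = x"
    "\<And>x y. x \<in> V \<Longrightarrow> y \<in> V \<Longrightarrow> (\<lambda>p s. \<exists>a. s = \<sigma> a p)\<^sup>*\<^sup>* x y"
    "\<exists>bl. bl r \<and> (\<forall>a. \<forall>x\<in>V. bl (\<sigma> a x) \<longleftrightarrow> \<not> bl x)"
  using assms unfolding Gq_def colored_graph_def by auto

lemma is_black_imp:
  assumes G: "Gq V \<sigma> r" and bl: "bl r" "\<forall>a. \<forall>x\<in>V. bl (\<sigma> a x) \<longleftrightarrow> \<not> bl x"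
    and ib: "is_black \<sigma> r v"
  shows "v \<in> V \<and> bl v"
  using ib unfolding is_black_def
proof (induction rule: rtranclp_induct)
  case base then show ?case using Gq_facts(2)[OF G] bl by simp
next
  case (step y z)
  then obtain a c where z: "z = \<sigma> c (\<sigma> a y)" by blast
  have "\<sigma> a y \<in> V" "\<not> bl (\<sigma> a y)" using step.IH Gq_facts(3)[OF G] bl(2) by auto
  then show ?case using z Gq_facts(3)[OF G] bl(2) by auto
qed

lemma is_black_2step: "is_black \<sigma> r v \<Longrightarrow> is_black \<sigma> r (\<sigma> c (\<sigma> a v))"
  unfolding is_black_def by (rule rtranclp.rtrancl_into_rtrancl) blast+

lemma is_black_char:
  assumes G: "Gq V \<sigma> r" and bl: "bl r" "\<forall>a. \<forall>x\<in>V. bl (\<sigma> a x) \<longleftrightarrow> \<not> bl x"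
    and v: "v \<in> V"
  shows "is_black \<sigma> r v \<longleftrightarrow> bl v"
proof
  assume "is_black \<sigma> r v" then show "bl v" using is_black_imp[OF G bl] by blast
next
  assume bv: "bl v"
  have path: "(\<lambda>p s. \<exists>a. s = \<sigma> a p)\<^sup>*\<^sup>* r v" using Gq_facts(6)[OF G Gq_facts(2)[OF G] v] .
  have "z \<in> V \<and> (bl z \<longrightarrow> is_black \<sigma> r z) \<and> (\<not> bl z \<longrightarrow> (\<forall>a. is_black \<sigma> r (\<sigma> a z)))"
    if "(\<lambda>p s. \<exists>a. s = \<sigma> a p)\<^sup>*\<^sup>* r z" for z
    using that
  proof (induction rule: rtranclp_induct)
    case base then show ?case using Gq_facts(2)[OF G] bl unfolding is_black_def by simp
  next
    case (step y z)
    then obtain a where z: "z = \<sigma> a y" by blast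
    have yV: "y \<in> V" using step.IH by simp
    have zV: "z \<in> V" using z Gq_facts(3)[OF G yV] by simp
    show ?case
    proof (cases "bl z")
      case True
      then have "\<not> bl y" using z bl(2) yV by auto
      then have "is_black \<sigma> r z" using step.IH z by blast
      then show ?thesis using True zV by simp
    next
      case False
      then have by': "bl y" using z bl(2) yV by auto
      then have iy: "is_black \<sigma> r y" using step.IH by blast
      have "is_black \<sigma> r (\<sigma> c z)" for c
        using is_black_2step[OF iy, of c a] z by simp
      then show ?thesis using False zV by simp
    qed
  qed
  then show "is_black \<sigma> r v" using path bv by blast
qed

lemma black_witness:
  assumes G: "Gq V \<sigma> r"
  shows "\<forall>v\<in>V. \<forall>a. is_black \<sigma> r (\<sigma> a v) \<longleftrightarrow> \<not> is_black \<sigma> r v"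
    and "\<And>v. is_black \<sigma> r v \<Longrightarrow> v \<in> V"
    and "is_black \<sigma> r r"
proof -
  obtain bl where bl: "bl r" "\<forall>a. \<forall>x\<in>V. bl (\<sigma> a x) \<longleftrightarrow> \<not> bl x" using Gq_facts(7)[OF G] by blast
  show "\<forall>v\<in>V. \<forall>a. is_black \<sigma> r (\<sigma> a v) \<longleftrightarrow> \<not> is_black \<sigma> r v"
    using is_black_char[OF G bl] Gq_facts(3)[OF G] bl(2) by auto
  show "\<And>v. is_black \<sigma> r v \<Longrightarrow> v \<in> V" using is_black_imp[OF G bl] by blast
  show "is_black \<sigma> r r" unfolding is_black_def by simp
qed




definition half_iso where
  "half_iso \<sigma>1 r1 \<phi>1 V2 \<sigma>2 r2 \<phi>2 v = (if is_black \<sigma>1 r1 v then inv_into {x\<in>V2. is_black \<sigma>2 r2 x} \<phi>2 (\<phi>1 v)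
     else \<sigma>2 None (inv_into {x\<in>V2. is_black \<sigma>2 r2 x} \<phi>2 (\<phi>1 (\<sigma>1 None v))))"

lemma half_iso_props:
  fixes \<sigma>1 :: "'c option \<Rightarrow> 'v \<Rightarrow> 'v" and \<sigma>2 :: "'c option \<Rightarrow> 'u \<Rightarrow> 'u"
  assumes G1: "Gq V1 \<sigma>1 r1" and G2: "Gq V2 \<sigma>2 r2"
    and P1: "bij_betw \<phi>1 {x\<in>V1. is_black \<sigma>1 r1 x} W"
    and H1: "\<forall>c. \<forall>b\<in>{x\<in>V1. is_black \<sigma>1 r1 x}. \<phi>1 (\<sigma>1 None (\<sigma>1 (Some c) b)) = succ c (\<phi>1 b)"
    and P2: "bij_betw \<phi>2 {x\<in>V2. is_black \<sigma>2 r2 x} W"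
    and H2: "\<forall>c. \<forall>b\<in>{x\<in>V2. is_black \<sigma>2 r2 x}. \<phi>2 (\<sigma>2 None (\<sigma>2 (Some c) b)) = succ c (\<phi>2 b)"
  defines "\<psi> \<equiv> half_iso \<sigma>1 r1 \<phi>1 V2 \<sigma>2 r2 \<phi>2"
  shows "\<And>v. v \<in> V1 \<Longrightarrow> is_black \<sigma>1 r1 v \<Longrightarrow> \<psi> v \<in> V2 \<and> is_black \<sigma>2 r2 (\<psi> v) \<and> \<phi>2 (\<psi> v) = \<phi>1 v"
    and "\<And>v. v \<in> V1 \<Longrightarrow> \<psi> v \<in> V2"
    and "\<And>v a. v \<in> V1 \<Longrightarrow> \<psi> (\<sigma>1 a v) = \<sigma>2 a (\<psi> v)"
proof -
  let ?B2 = "{x\<in>V2. is_black \<sigma>2 r2 x}"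
  let ?inv = "inv_into ?B2 \<phi>2"
  have BW1: "\<forall>v\<in>V1. \<forall>a. is_black \<sigma>1 r1 (\<sigma>1 a v) \<longleftrightarrow> \<not> is_black \<sigma>1 r1 v" using black_witness(1)[OF G1] .
  have BW2: "\<forall>v\<in>V2. \<forall>a. is_black \<sigma>2 r2 (\<sigma>2 a v) \<longleftrightarrow> \<not> is_black \<sigma>2 r2 v" using black_witness(1)[OF G2] .
  have inj2: "inj_on \<phi>2 ?B2" and img2: "\<phi>2 ` ?B2 = W" using P2 unfolding bij_betw_def by auto
  have img1: "\<phi>1 ` {x\<in>V1. is_black \<sigma>1 r1 x} = W" using P1 unfolding bij_betw_def by auto
  have invB: "w \<in> W \<Longrightarrow> ?inv w \<in> ?B2 \<and> \<phi>2 (?inv w) = w" for w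
  proof -
    assume "w \<in> W"
    then have wi: "w \<in> \<phi>2 ` ?B2" using img2 by simp
    show ?thesis using inv_into_into[OF wi] f_inv_into_f[OF wi] by blast
  qed
  have blk: "v \<in> V1 \<Longrightarrow> is_black \<sigma>1 r1 v \<Longrightarrow> \<psi> v \<in> V2 \<and> is_black \<sigma>2 r2 (\<psi> v) \<and> \<phi>2 (\<psi> v) = \<phi>1 v" for v
  proof -
    assume v: "v \<in> V1" "is_black \<sigma>1 r1 v"
    then have "\<phi>1 v \<in> W" using img1 by blast
    then show ?thesis using invB v unfolding \<psi>_def half_iso_def by simp
  qed
  then show "\<And>v. v \<in> V1 \<Longrightarrow> is_black \<sigma>1 r1 v \<Longrightarrow> \<psi> v \<in> V2 \<and> is_black \<sigma>2 r2 (\<psi> v) \<and> \<phi>2 (\<psi> v) = \<phi>1 v" by blast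
  have wht: "\<psi> v = \<sigma>2 None (\<psi> (\<sigma>1 None v))" if "v \<in> V1" "\<not> is_black \<sigma>1 r1 v" for v
  proof -
    have "is_black \<sigma>1 r1 (\<sigma>1 None v)" using BW1 that by blast
    then show ?thesis using that Gq_facts(5)[OF G1 that(1)] unfolding \<psi>_def half_iso_def by simp
  qed
  show inV: "\<And>v. v \<in> V1 \<Longrightarrow> \<psi> v \<in> V2"
  proof -
    fix v assume v: "v \<in> V1"
    show "\<psi> v \<in> V2"
    proof (cases "is_black \<sigma>1 r1 v")
      case True then show ?thesis using blk v by blast
    next
      case False
      have "\<sigma>1 None v \<in> V1" "is_black \<sigma>1 r1 (\<sigma>1 None v)" using v False BW1 Gq_facts(3)[OF G1] by auto
      then have "\<psi> (\<sigma>1 None v) \<in> V2" using blk by blast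
      then show ?thesis using wht[OF v False] Gq_facts(3)[OF G2] by simp
    qed
  qed
  have comm_b: "\<psi> (\<sigma>1 a v) = \<sigma>2 a (\<psi> v)" if v: "v \<in> V1" "is_black \<sigma>1 r1 v" for v a
  proof -
    have w1: "\<not> is_black \<sigma>1 r1 (\<sigma>1 a v)" "\<sigma>1 a v \<in> V1" using BW1 v Gq_facts(3)[OF G1] by auto
    have bu: "\<psi> v \<in> V2" "is_black \<sigma>2 r2 (\<psi> v)" "\<phi>2 (\<psi> v) = \<phi>1 v" using blk[OF v] by auto
    show ?thesis
    proof (cases a)
      case None
      have "\<psi> (\<sigma>1 a v) = \<sigma>2 None (\<psi> (\<sigma>1 None (\<sigma>1 a v)))" using wht[OF w1(2) w1(1)] .
      also have "\<sigma>1 None (\<sigma>1 a v) = v" using None Gq_facts(5)[OF G1 v(1)] by simp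
      finally show ?thesis using None by simp
    next
      case (Some c)
      let ?u2 = "\<sigma>2 None (\<sigma>2 (Some c) (\<psi> v))"
      have u2B: "?u2 \<in> ?B2"
        using is_black_2step[OF bu(2)] black_witness(2)[OF G2] by blast
      have "\<phi>2 ?u2 = succ c (\<phi>1 v)" using H2 bu by auto
      also have "\<dots> = \<phi>1 (\<sigma>1 None (\<sigma>1 (Some c) v))" using H1 v by auto
      finally have e: "\<phi>2 ?u2 = \<phi>1 (\<sigma>1 None (\<sigma>1 (Some c) v))" .
      have b2: "is_black \<sigma>1 r1 (\<sigma>1 None (\<sigma>1 (Some c) v))" "\<sigma>1 None (\<sigma>1 (Some c) v) \<in> V1"
        using is_black_2step[OF v(2)] black_witness(2)[OF G1] by blast+
      have "\<psi> (\<sigma>1 a v) = \<sigma>2 None (\<psi> (\<sigma>1 None (\<sigma>1 a v)))" using wht[OF w1(2) w1(1)] .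
      also have "\<psi> (\<sigma>1 None (\<sigma>1 a v)) = ?u2"
      proof -
        have "\<psi> (\<sigma>1 None (\<sigma>1 a v)) = ?inv (\<phi>1 (\<sigma>1 None (\<sigma>1 (Some c) v)))"
          using b2 Some unfolding \<psi>_def half_iso_def by simp
        also have "\<dots> = ?inv (\<phi>2 ?u2)" using e by simp
        also have "\<dots> = ?u2" using inv_into_f_f[OF inj2 u2B] .
        finally show ?thesis .
      qed
      also have "\<sigma>2 None ?u2 = \<sigma>2 (Some c) (\<psi> v)"
        using Gq_facts(5)[OF G2 Gq_facts(3)[OF G2 bu(1)]] by simp
      finally show ?thesis using Some by simp
    qed
  qed
  show "\<And>v a. v \<in> V1 \<Longrightarrow> \<psi> (\<sigma>1 a v) = \<sigma>2 a (\<psi> v)"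
  proof -
    fix v a assume v: "v \<in> V1"
    show "\<psi> (\<sigma>1 a v) = \<sigma>2 a (\<psi> v)"
    proof (cases "is_black \<sigma>1 r1 v")
      case True then show ?thesis using comm_b v by blast
    next
      case False
      let ?v' = "\<sigma>1 a v"
      have v': "?v' \<in> V1" "is_black \<sigma>1 r1 ?v'" using v False BW1 Gq_facts(3)[OF G1] by auto
      have "\<psi> (\<sigma>1 a ?v') = \<sigma>2 a (\<psi> ?v')" using comm_b[OF v'] .
      then have "\<psi> v = \<sigma>2 a (\<psi> ?v')" using Gq_facts(5)[OF G1 v] by simp
      then show ?thesis using Gq_facts(5)[OF G2 inV[OF v'(1)]] by simp
    qed
  qed
qed

lemma psi_iso:
  fixes \<sigma>1 :: "'c option \<Rightarrow> 'v \<Rightarrow> 'v" and \<sigma>2 :: "'c option \<Rightarrow> 'u \<Rightarrow> 'u"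
  assumes G1: "Gq V1 \<sigma>1 r1" and G2: "Gq V2 \<sigma>2 r2"
    and R1: "psi_rel V1 \<sigma>1 r1 W w0 nb succ" and R2: "psi_rel V2 \<sigma>2 r2 W w0 nb succ"
  shows "\<exists>\<psi>. bij_betw \<psi> V1 V2 \<and> (\<forall>v\<in>V1. \<forall>a. \<psi> (\<sigma>1 a v) = \<sigma>2 a (\<psi> v))"
proof -
  obtain \<phi>1 where P1: "bij_betw \<phi>1 {x\<in>V1. is_black \<sigma>1 r1 x} W"
    and H1: "\<forall>c. \<forall>b\<in>{x\<in>V1. is_black \<sigma>1 r1 x}. \<phi>1 (\<sigma>1 None (\<sigma>1 (Some c) b)) = succ c (\<phi>1 b)"
    using R1 unfolding psi_rel_def by blast
  obtain \<phi>2 where P2: "bij_betw \<phi>2 {x\<in>V2. is_black \<sigma>2 r2 x} W"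
    and H2: "\<forall>c. \<forall>b\<in>{x\<in>V2. is_black \<sigma>2 r2 x}. \<phi>2 (\<sigma>2 None (\<sigma>2 (Some c) b)) = succ c (\<phi>2 b)"
    using R2 unfolding psi_rel_def by blast
  define \<psi> where "\<psi> = half_iso \<sigma>1 r1 \<phi>1 V2 \<sigma>2 r2 \<phi>2"
  define \<psi>' where "\<psi>' = half_iso \<sigma>2 r2 \<phi>2 V1 \<sigma>1 r1 \<phi>1"
  note A = half_iso_props[OF G1 G2 P1 H1 P2 H2, folded \<psi>_def]
  note B = half_iso_props[OF G2 G1 P2 H2 P1 H1, folded \<psi>'_def]
  have inj1: "inj_on \<phi>1 {x\<in>V1. is_black \<sigma>1 r1 x}" using P1 bij_betw_def by blast
  have inj2: "inj_on \<phi>2 {x\<in>V2. is_black \<sigma>2 r2 x}" using P2 bij_betw_def by blast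
  have BW1: "\<forall>v\<in>V1. \<forall>a. is_black \<sigma>1 r1 (\<sigma>1 a v) \<longleftrightarrow> \<not> is_black \<sigma>1 r1 v" using black_witness(1)[OF G1] .
  have BW2: "\<forall>v\<in>V2. \<forall>a. is_black \<sigma>2 r2 (\<sigma>2 a v) \<longleftrightarrow> \<not> is_black \<sigma>2 r2 v" using black_witness(1)[OF G2] .
  have bb1: "\<psi>' (\<psi> v) = v" if v: "v \<in> V1" "is_black \<sigma>1 r1 v" for v
  proof -
    have u: "\<psi> v \<in> V2" "is_black \<sigma>2 r2 (\<psi> v)" "\<phi>2 (\<psi> v) = \<phi>1 v" using A(1)[OF v] by auto
    have "\<phi>1 (\<psi>' (\<psi> v)) = \<phi>1 v" "\<psi>' (\<psi> v) \<in> V1" "is_black \<sigma>1 r1 (\<psi>' (\<psi> v))" using B(1)[OF u(1,2)] u(3) by auto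
    then show ?thesis using inj_onD[OF inj1, of "\<psi>' (\<psi> v)" v] v by simp
  qed
  have bb2: "\<psi> (\<psi>' v) = v" if v: "v \<in> V2" "is_black \<sigma>2 r2 v" for v
  proof -
    have u: "\<psi>' v \<in> V1" "is_black \<sigma>1 r1 (\<psi>' v)" "\<phi>1 (\<psi>' v) = \<phi>2 v" using B(1)[OF v] by auto
    have "\<phi>2 (\<psi> (\<psi>' v)) = \<phi>2 v" "\<psi> (\<psi>' v) \<in> V2" "is_black \<sigma>2 r2 (\<psi> (\<psi>' v))" using A(1)[OF u(1,2)] u(3) by auto
    then show ?thesis using inj_onD[OF inj2, of "\<psi> (\<psi>' v)" v] v by simp
  qed
  have id1: "\<psi>' (\<psi> v) = v" if v: "v \<in> V1" for v
  proof (cases "is_black \<sigma>1 r1 v")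
    case True then show ?thesis using bb1 v by blast
  next
    case False
    let ?v = "\<sigma>1 None v"
    have v': "?v \<in> V1" "is_black \<sigma>1 r1 ?v" using v False BW1 Gq_facts(3)[OF G1] by auto
    have "\<psi>' (\<psi> (\<sigma>1 None ?v)) = \<psi>' (\<sigma>2 None (\<psi> ?v))" using A(3)[OF v'(1)] by simp
    also have "\<dots> = \<sigma>1 None (\<psi>' (\<psi> ?v))" using B(3)[OF A(2)[OF v'(1)]] by simp
    also have "\<dots> = \<sigma>1 None ?v" using bb1[OF v'] by simp
    finally show ?thesis using Gq_facts(5)[OF G1 v] by simp
  qed
  have id2: "\<psi> (\<psi>' v) = v" if v: "v \<in> V2" for v
  proof (cases "is_black \<sigma>2 r2 v")
    case True then show ?thesis using bb2 v by blast
  next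
    case False
    let ?v = "\<sigma>2 None v"
    have v': "?v \<in> V2" "is_black \<sigma>2 r2 ?v" using v False BW2 Gq_facts(3)[OF G2] by auto
    have "\<psi> (\<psi>' (\<sigma>2 None ?v)) = \<psi> (\<sigma>1 None (\<psi>' ?v))" using B(3)[OF v'(1)] by simp
    also have "\<dots> = \<sigma>2 None (\<psi> (\<psi>' ?v))" using A(3)[OF B(2)[OF v'(1)]] by simp
    also have "\<dots> = \<sigma>2 None ?v" using bb2[OF v'] by simp
    finally show ?thesis using Gq_facts(5)[OF G2 v] by simp
  qed
  have "bij_betw \<psi> V1 V2"
  proof (rule bij_betw_byWitness[where f'=\<psi>'])
    show "\<forall>a\<in>V1. \<psi>' (\<psi> a) = a" using id1 by blast
    show "\<forall>a'\<in>V2. \<psi> (\<psi>' a') = a'" using id2 by blast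
    show "\<psi> ` V1 \<subseteq> V2" using A(2) by blast
    show "\<psi>' ` V2 \<subseteq> V1" using B(2) by blast
  qed
  then show ?thesis using A(3) by blast
qed



locale msetup =
  fixes V :: "'v set" and \<sigma> :: "'c::finite option \<Rightarrow> 'v \<Rightarrow> 'v" and r :: 'v
    and W :: "'w set" and w0 :: 'w and nb :: "'c \<Rightarrow> 'w \<Rightarrow> 'x"
    and succ :: "'c \<Rightarrow> 'w \<Rightarrow> 'w" and w :: 'w and i :: 'c
  assumes card3: "CARD('c) \<ge> 3"
    and G: "Gq V \<sigma> r"
    and S: "constellation W w0 nb succ"
    and R: "psi_rel V \<sigma> r W w0 nb succ"
    and wW: "w \<in> W" and ww0: "w \<noteq> w0"
    and leaf: "\<forall>c. c \<noteq> i \<longrightarrow> nbdeg W nb c w = 1"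
    and deg: "nbdeg W nb i w \<ge> 2"
begin

definition B where "B = {v\<in>V. is_black \<sigma> r v}"

definition \<phi> where "\<phi> = (SOME \<phi>. bij_betw \<phi> B W \<and> \<phi> r = w0 \<and>
        (\<forall>c. \<forall>b\<in>B. \<phi> (\<sigma> None (\<sigma> (Some c) b)) = succ c (\<phi> b)))"

lemma phi_props: "bij_betw \<phi> B W" "\<phi> r = w0" "\<And>c b. b \<in> B \<Longrightarrow> \<phi> (\<sigma> None (\<sigma> (Some c) b)) = succ c (\<phi> b)"
proof -
  have "\<exists>\<phi>. bij_betw \<phi> B W \<and> \<phi> r = w0 \<and> (\<forall>c. \<forall>b\<in>B. \<phi> (\<sigma> None (\<sigma> (Some c) b)) = succ c (\<phi> b))"
    using R unfolding psi_rel_def B_def .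
  then have H: "bij_betw \<phi> B W \<and> \<phi> r = w0 \<and> (\<forall>c. \<forall>b\<in>B. \<phi> (\<sigma> None (\<sigma> (Some c) b)) = succ c (\<phi> b))"
    unfolding \<phi>_def by (rule someI_ex[where P="\<lambda>\<phi>. bij_betw \<phi> B W \<and> \<phi> r = w0 \<and>
        (\<forall>c. \<forall>b\<in>B. \<phi> (\<sigma> None (\<sigma> (Some c) b)) = succ c (\<phi> b))"])
  show "bij_betw \<phi> B W" by (rule H[THEN conjunct1])
  show "\<phi> r = w0" by (rule H[THEN conjunct2, THEN conjunct1])
  fix c b assume "b \<in> B"
  then show "\<phi> (\<sigma> None (\<sigma> (Some c) b)) = succ c (\<phi> b)" using H[THEN conjunct2, THEN conjunct2] by blast
qed

lemma phi_inj: "inj_on \<phi> B" using phi_props(1) by (simp add: bij_betw_def)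
lemma phi_img: "\<phi> ` B = W" using phi_props(1) by (simp add: bij_betw_def)

lemma sV: "u \<in> V \<Longrightarrow> \<sigma> a u \<in> V" using Gq_facts(3)[OF G] .
lemma sne: "u \<in> V \<Longrightarrow> \<sigma> a u \<noteq> u" using Gq_facts(4)[OF G] .
lemma ss: "u \<in> V \<Longrightarrow> \<sigma> a (\<sigma> a u) = u" using Gq_facts(5)[OF G] .
lemma rV: "r \<in> V" using Gq_facts(2)[OF G] .
lemma BW: "u \<in> V \<Longrightarrow> is_black \<sigma> r (\<sigma> a u) \<longleftrightarrow> \<not> is_black \<sigma> r u" using black_witness(1)[OF G] by blast
lemma blackV: "is_black \<sigma> r u \<Longrightarrow> u \<in> V" using black_witness(2)[OF G] .
lemma rB: "r \<in> B" using black_witness(3)[OF G] rV unfolding B_def by simp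
lemma B2: "u \<in> B \<Longrightarrow> \<sigma> c (\<sigma> a u) \<in> B"
proof -
  assume "u \<in> B"
  then have "is_black \<sigma> r (\<sigma> c (\<sigma> a u))" unfolding B_def using is_black_2step[of \<sigma> r u c a] by simp
  then show ?thesis unfolding B_def using blackV by simp
qed

lemma S_all: "finite W \<and> w0 \<in> W \<and>
  (\<forall>c. succ c permutes W \<and> (\<forall>w\<in>W. nb c (succ c w) = nb c w) \<and>
        (\<forall>w\<in>W. \<forall>w'\<in>W. nb c w = nb c w' \<longrightarrow> (\<exists>n. (succ c ^^ n) w = w'))) \<and>
  (\<forall>w\<in>W. \<forall>w'\<in>W. (\<lambda>p s. p \<in> W \<and> s \<in> W \<and> (\<exists>c. nb c p = nb c s))\<^sup>*\<^sup>* w w')"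
  using S unfolding constellation_def .

lemmas S_parts = S_all[THEN conjunct1] S_all[THEN conjunct2, THEN conjunct1]
  S_all[THEN conjunct2, THEN conjunct2, THEN conjunct1] S_all[THEN conjunct2, THEN conjunct2, THEN conjunct2]

lemma perm: "succ c permutes W" using S_parts(3) by simp
lemma succW: "u \<in> W \<Longrightarrow> succ c u \<in> W" using permutes_in_image[OF perm] by simp
lemma succ_inj: "succ c u = succ c v \<Longrightarrow> u = v" by (rule injD[OF permutes_inj[OF perm]])
lemma succ_out: "u \<notin> W \<Longrightarrow> succ c u = u" by (rule permutes_not_in[OF perm])
lemma nbsucc: "u \<in> W \<Longrightarrow> nb c (succ c u) = nb c u" using S_parts(3) by simp
lemma orbit: "u \<in> W \<Longrightarrow> u' \<in> W \<Longrightarrow> nb c u = nb c u' \<Longrightarrow> \<exists>n. (succ c ^^ n) u = u'"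
  using S_parts(3) by simp
lemma Wfin: "finite W" using S_parts(1) .
lemma w0W: "w0 \<in> W" using S_parts(2) .
lemma Wconn: "u \<in> W \<Longrightarrow> u' \<in> W \<Longrightarrow> (\<lambda>p s. p \<in> W \<and> s \<in> W \<and> (\<exists>c. nb c p = nb c s))\<^sup>*\<^sup>* u u'"
  using S_parts(4) by simp

lemma leaf_eq: assumes "c \<noteq> i" "s \<in> W" "nb c s = nb c w" shows "s = w"
proof -
  have "card {w'\<in>W. nb c w' = nb c w} = 1" using leaf assms(1) unfolding nbdeg_def by simp
  then obtain z where z: "{w'\<in>W. nb c w' = nb c w} = {z}" by (rule card_1_singletonE)
  have "w \<in> {z}" "s \<in> {z}" using z wW assms by blast+
  then show ?thesis by simp
qed

lemma succ_fix: "c \<noteq> i \<Longrightarrow> succ c w = w"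
  using leaf_eq[of c "succ c w"] succW[OF wW] nbsucc[OF wW] by simp

lemma succ_i_ne: "succ i w \<noteq> w"
proof
  assume f: "succ i w = w"
  have it: "(succ i ^^ n) w = w" for n by (induction n) (simp_all add: f)
  have "{w'\<in>W. nb i w' = nb i w} \<subseteq> {w}"
  proof
    fix s assume "s \<in> {w'\<in>W. nb i w' = nb i w}"
    then obtain n where "(succ i ^^ n) w = s" using orbit[OF wW, of s i] by auto
    then show "s \<in> {w}" using it by simp
  qed
  then have "card {w'\<in>W. nb i w' = nb i w} \<le> 1" using card_mono[of "{w}"] by fastforce
  then show False using deg unfolding nbdeg_def by simp
qed

definition b where "b = inv_into B \<phi> w"
definition b' where "b' = \<sigma> None b"
definition x where "x = \<sigma> (Some i) b"
definition y where "y = \<sigma> (Some i) b'"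

lemma bB: "b \<in> B" and phib: "\<phi> b = w"
  using wW phi_img unfolding b_def by (auto intro: inv_into_into f_inv_into_f)

lemma bV: "b \<in> V" and b_black: "is_black \<sigma> r b" using bB unfolding B_def by auto
lemma b'V: "b' \<in> V" using sV[OF bV] unfolding b'_def .
lemma xV: "x \<in> V" using sV[OF bV] unfolding x_def .
lemma yV: "y \<in> V" using sV[OF b'V] unfolding y_def .
lemma b'_white: "\<not> is_black \<sigma> r b'" using BW[OF bV] b_black unfolding b'_def by simp
lemma x_white: "\<not> is_black \<sigma> r x" using BW[OF bV] b_black unfolding x_def by simp
lemma y_black: "is_black \<sigma> r y" using BW[OF b'V] b'_white unfolding y_def by simp

lemma tb: assumes "c \<noteq> i" shows "\<sigma> (Some c) b = b'"
proof -
  have "\<phi> (\<sigma> None (\<sigma> (Some c) b)) = \<phi> b" using phi_props(3)[OF bB] phib succ_fix[OF assms] by simp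
  then have "\<sigma> None (\<sigma> (Some c) b) = b" using inj_onD[OF phi_inj] B2[OF bB] bB by blast
  then have "\<sigma> None (\<sigma> None (\<sigma> (Some c) b)) = \<sigma> None b" by simp
  then show ?thesis using ss[OF sV[OF bV]] unfolding b'_def by simp
qed

lemma tb': "c \<noteq> i \<Longrightarrow> \<sigma> (Some c) b' = b" using tb ss[OF bV] by metis
lemma tb0: "\<sigma> None b' = b" unfolding b'_def using ss[OF bV] .
lemma tx: "\<sigma> (Some i) x = b" unfolding x_def using ss[OF bV] .
lemma ty: "\<sigma> (Some i) y = b'" unfolding y_def using ss[OF b'V] .

lemma dist: "b \<noteq> b'" "x \<noteq> b" "x \<noteq> b'" "y \<noteq> b" "y \<noteq> b'" "x \<noteq> y"
proof -
  show bb': "b \<noteq> b'" using sne[OF bV] unfolding b'_def by metis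
  show "x \<noteq> b" using sne[OF bV] unfolding x_def by metis
  show xb': "x \<noteq> b'"
  proof
    assume "x = b'"
    then have "\<phi> (\<sigma> None (\<sigma> (Some i) b)) = \<phi> b" unfolding x_def b'_def using ss[OF bV] by simp
    then show False using phi_props(3)[OF bB] phib succ_i_ne by simp
  qed
  show "y \<noteq> b'" using sne[OF b'V] unfolding y_def by metis
  show "y \<noteq> b" using xb' ss[OF b'V] unfolding y_def x_def by metis
  show "x \<noteq> y" using bb' ss[OF bV] ss[OF b'V] unfolding y_def x_def by metis
qed

lemma b_ne_r: "b \<noteq> r" using phib phi_props(2) ww0 by auto
lemma b'_ne_r: "b' \<noteq> r" using b'_white black_witness(3)[OF G] by auto

lemma succ_to_w:
  assumes u: "u \<in> B" "u \<noteq> b" and e: "succ c (\<phi> u) = w"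
  shows "c = i \<and> u = y"
proof -
  have cI: "c = i"
  proof (rule ccontr)
    assume "c \<noteq> i"
    then have "succ c (\<phi> u) = succ c w" using e succ_fix by simp
    then have "\<phi> u = \<phi> b" using succ_inj phib by simp
    then show False using inj_onD[OF phi_inj] u bB by blast
  qed
  have "\<phi> (\<sigma> None (\<sigma> (Some i) u)) = \<phi> b" using phi_props(3)[OF u(1)] e cI phib by simp
  then have "\<sigma> None (\<sigma> (Some i) u) = b" using inj_onD[OF phi_inj] B2[OF u(1)] bB by blast
  then have "\<sigma> (Some i) u = b'" using ss[OF sV[OF blackV]] u(1) unfolding b'_def B_def
    by (metis (no_types, lifting) mem_Collect_eq)
  then have "u = y" unfolding y_def using ss u(1) unfolding B_def by (metis (no_types, lifting) mem_Collect_eq)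
  then show ?thesis using cI by simp
qed

end


context msetup begin

definition V2 where "V2 = V - {b, b'}"
definition \<sigma>2 where "\<sigma>2 a v = (if a = Some i \<and> v = x then y else if a = Some i \<and> v = y then x else \<sigma> a v)"

lemma xV2: "x \<in> V2" and yV2: "y \<in> V2" and rV2: "r \<in> V2"
  unfolding V2_def using xV yV rV dist b_ne_r b'_ne_r by auto

lemma sb_cases: "\<sigma> a b = (if a = Some i then x else b')"
  using tb unfolding x_def b'_def by (cases a) auto
lemma sb'_cases: "\<sigma> a b' = (if a = Some i then y else b)"
  using tb' tb0 unfolding y_def by (cases a) auto

lemma s_to_b: "v \<in> V \<Longrightarrow> \<sigma> a v = b \<Longrightarrow> v = (if a = Some i then x else b')"
  using ss[of v a] sb_cases[of a] by metis
lemma s_to_b': "v \<in> V \<Longrightarrow> \<sigma> a v = b' \<Longrightarrow> v = (if a = Some i then y else b)"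
  using ss[of v a] sb'_cases[of a] by metis

lemma s2_else: "v \<in> V2 \<Longrightarrow> \<not> (a = Some i \<and> (v = x \<or> v = y)) \<Longrightarrow> \<sigma>2 a v = \<sigma> a v \<and> \<sigma> a v \<in> V2"
proof -
  assume v: "v \<in> V2" and n: "\<not> (a = Some i \<and> (v = x \<or> v = y))"
  have vV: "v \<in> V" "v \<noteq> b" "v \<noteq> b'" using v unfolding V2_def by auto
  have "\<sigma> a v \<noteq> b" using s_to_b[OF vV(1), of a] vV n by (auto split: if_splits)
  moreover have "\<sigma> a v \<noteq> b'" using s_to_b'[OF vV(1), of a] vV n by (auto split: if_splits)
  ultimately show ?thesis using n sV[OF vV(1)] unfolding \<sigma>2_def V2_def by auto
qed

lemma s2V: "v \<in> V2 \<Longrightarrow> \<sigma>2 a v \<in> V2"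
  using s2_else[of v a] xV2 yV2 unfolding \<sigma>2_def by auto

lemma s2ne: "v \<in> V2 \<Longrightarrow> \<sigma>2 a v \<noteq> v"
  using s2_else[of v a] dist sne[of v a] unfolding \<sigma>2_def V2_def by auto

lemma s2s2: "v \<in> V2 \<Longrightarrow> \<sigma>2 a (\<sigma>2 a v) = v"
proof -
  assume v: "v \<in> V2"
  show ?thesis
  proof (cases "a = Some i \<and> (v = x \<or> v = y)")
    case True then show ?thesis using dist unfolding \<sigma>2_def by auto
  next
    case False
    have e: "\<sigma>2 a v = \<sigma> a v" "\<sigma> a v \<in> V2" using s2_else[OF v False] by auto
    have "\<not> (a = Some i \<and> (\<sigma> a v = x \<or> \<sigma> a v = y))"
    proof
      assume h: "a = Some i \<and> (\<sigma> a v = x \<or> \<sigma> a v = y)"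
      then have "v = \<sigma> a x \<or> v = \<sigma> a y" using ss v unfolding V2_def by (metis DiffD1)
      then show False using h tx ty v unfolding V2_def by auto
    qed
    then have "\<sigma>2 a (\<sigma> a v) = \<sigma> a (\<sigma> a v)" using s2_else[OF e(2)] by auto
    then show ?thesis using e ss v unfolding V2_def by auto
  qed
qed

lemma s2_black: "v \<in> V2 \<Longrightarrow> is_black \<sigma> r (\<sigma>2 a v) \<longleftrightarrow> \<not> is_black \<sigma> r v"
proof -
  assume v: "v \<in> V2"
  show ?thesis
  proof (cases "a = Some i \<and> (v = x \<or> v = y)")
    case True then show ?thesis using x_white y_black dist unfolding \<sigma>2_def by auto
  next
    case False then show ?thesis using s2_else[OF v False] BW v unfolding V2_def by auto
  qed
qed

abbreviation step2 where "step2 \<equiv> (\<lambda>p s. \<exists>a. s = \<sigma>2 a p)"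
abbreviation step1 where "step1 \<equiv> (\<lambda>p s. \<exists>a. s = \<sigma> a p)"

definition pi where "pi z = (if z = b then x else if z = b' then y else z)"

lemma xy_conn: "u \<in> {x,y} \<Longrightarrow> v \<in> {x,y} \<Longrightarrow> step2\<^sup>*\<^sup>* u v"
proof -
  assume u: "u \<in> {x,y}" and v: "v \<in> {x,y}"
  have "step2 x y" unfolding \<sigma>2_def by (intro exI[of _ "Some i"]) simp
  moreover have "step2 y x" using dist unfolding \<sigma>2_def by (intro exI[of _ "Some i"]) simp
  ultimately show ?thesis using u v by auto
qed

lemma pi_step: assumes z: "z \<in> V" shows "step2\<^sup>*\<^sup>* (pi z) (pi (\<sigma> a z))"
proof (cases "z \<in> {b,b'} \<or> \<sigma> a z \<in> {b,b'}")
  case True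
  have "pi z \<in> {x,y} \<and> pi (\<sigma> a z) \<in> {x,y}"
  proof -
    consider "z = b" | "z = b'" | "\<sigma> a z = b" | "\<sigma> a z = b'" using True by blast
    then show ?thesis
    proof cases
      case 1 then show ?thesis using sb_cases[of a] dist unfolding pi_def by auto
    next
      case 2 then show ?thesis using sb'_cases[of a] dist unfolding pi_def by auto
    next
      case 3 then show ?thesis using s_to_b[OF z 3] dist unfolding pi_def by auto
    next
      case 4 then show ?thesis using s_to_b'[OF z 4] dist unfolding pi_def by auto
    qed
  qed
  then show ?thesis using xy_conn by blast
next
  case False
  then have zV2: "z \<in> V2" and "\<sigma> a z \<in> V2" using z sV unfolding V2_def by auto
  have n: "\<not> (a = Some i \<and> (z = x \<or> z = y))" using False tx ty by auto
  have "\<sigma>2 a z = \<sigma> a z" using s2_else[OF zV2 n] by simp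
  then have "step2 z (\<sigma> a z)" by metis
  then show ?thesis using False unfolding pi_def by auto
qed

lemma conn_r: "v \<in> V2 \<Longrightarrow> step2\<^sup>*\<^sup>* r v"
proof -
  assume v: "v \<in> V2"
  have "z \<in> V \<and> step2\<^sup>*\<^sup>* r (pi z)" if "step1\<^sup>*\<^sup>* r z" for z
    using that
  proof (induction rule: rtranclp_induct)
    case base then show ?case using rV b_ne_r b'_ne_r unfolding pi_def by auto
  next
    case (step y' z)
    then obtain a where z: "z = \<sigma> a y'" by blast
    have "step2\<^sup>*\<^sup>* (pi y') (pi z)" using pi_step[of y' a] step.IH z by simp
    then show ?case using step.IH z sV by (meson rtranclp_trans)
  qed
  moreover have "step1\<^sup>*\<^sup>* r v" using Gq_facts(6)[OF G rV] v unfolding V2_def by simp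
  ultimately have "step2\<^sup>*\<^sup>* r (pi v)" by blast
  moreover have "pi v = v" using v unfolding pi_def V2_def by auto
  ultimately show ?thesis by simp
qed

lemma conn_sym: assumes p: "p \<in> V2" and st: "step2\<^sup>*\<^sup>* p s" shows "s \<in> V2 \<and> step2\<^sup>*\<^sup>* s p"
  using st
proof (induction rule: rtranclp_induct)
  case base then show ?case using p by simp
next
  case (step y' z)
  then obtain a where z: "z = \<sigma>2 a y'" by blast
  have zV: "z \<in> V2" using s2V step.IH z by simp
  have "y' = \<sigma>2 a z" using s2s2 step.IH z by simp
  then have "step2 z y'" by blast
  moreover have "step2\<^sup>*\<^sup>* y' p" using step.IH by simp
  ultimately have "step2\<^sup>*\<^sup>* z p" by (rule converse_rtranclp_into_rtranclp)
  then show ?case using zV by simp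
qed

lemma G2: "Gq V2 \<sigma>2 r"
  unfolding Gq_def colored_graph_def
proof (intro conjI ballI allI)
  show "finite V2" using Gq_facts(1)[OF G] unfolding V2_def by simp
  show "V2 \<noteq> {}" using rV2 by blast
  show "r \<in> V2" using rV2 .
  fix a v assume v: "v \<in> V2"
  show "\<sigma>2 a v \<in> V2" using s2V[OF v] .
  show "\<sigma>2 a v \<noteq> v" using s2ne[OF v] .
  show "\<sigma>2 a (\<sigma>2 a v) = v" using s2s2[OF v] .
next
  fix u v assume u: "u \<in> V2" and v: "v \<in> V2"
  have "step2\<^sup>*\<^sup>* u r" using conn_sym[OF rV2 conn_r[OF u]] by blast
  then show "step2\<^sup>*\<^sup>* u v" using conn_r[OF v] by (meson rtranclp_trans)
next
  show "\<exists>black. black r \<and> (\<forall>a. \<forall>x\<in>V2. black (\<sigma>2 a x) = (\<not> black x))"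
    using s2_black black_witness(3)[OF G] by blast
qed

lemma s2_black_all: "\<forall>a. \<forall>v\<in>V2. is_black \<sigma> r (\<sigma>2 a v) \<longleftrightarrow> \<not> is_black \<sigma> r v"
  using s2_black by blast

lemma black2: "is_black \<sigma>2 r v \<longleftrightarrow> v \<in> V2 \<and> is_black \<sigma> r v"
proof
  assume h: "is_black \<sigma>2 r v"
  then have v: "v \<in> V2" using black_witness(2)[OF G2] by blast
  have "is_black \<sigma> r v" using is_black_char[OF G2 black_witness(3)[OF G] s2_black_all v] h by blast
  then show "v \<in> V2 \<and> is_black \<sigma> r v" using v by simp
next
  assume h: "v \<in> V2 \<and> is_black \<sigma> r v"
  then show "is_black \<sigma>2 r v" using is_black_char[OF G2 black_witness(3)[OF G] s2_black_all, of v] by blast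
qed

lemma B2_eq: "{v\<in>V2. is_black \<sigma>2 r v} = B - {b}"
  using black2 b'_white unfolding V2_def B_def by auto

lemma psi_rel2: "psi_rel V2 \<sigma>2 r (W - {w}) w0 nb (remove_succ succ w)"
  unfolding psi_rel_def B2_eq
proof (intro exI[of _ \<phi>] conjI ballI allI)
  have sub: "B - {b} \<subseteq> B" by blast
  have "inj_on \<phi> (B - {b})" using phi_inj inj_on_subset sub by blast
  moreover have "\<phi> ` (B - {b}) = W - {w}"
    using inj_on_image_set_diff[OF phi_inj, of B "{b}"] bB phi_img phib by auto
  ultimately show "bij_betw \<phi> (B - {b}) (W - {w})" unfolding bij_betw_def by simp
  show "\<phi> r = w0" using phi_props(2) .
  fix c u assume u: "u \<in> B - {b}"
  have uB: "u \<in> B" "u \<noteq> b" using u by auto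
  have uV2: "u \<in> V2" using uB b'_white unfolding B_def V2_def by auto
  have ux: "u \<noteq> x" using uB x_white unfolding B_def by auto
  have pw: "\<phi> u \<noteq> w" using inj_onD[OF phi_inj, of u b] uB bB phib by auto
  have s2N: "\<sigma>2 None v = \<sigma> None v" for v unfolding \<sigma>2_def by simp
  show "\<phi> (\<sigma>2 None (\<sigma>2 (Some c) u)) = remove_succ succ w c (\<phi> u)"
  proof (cases "c = i \<and> u = y")
    case True
    have "succ c (\<phi> u) = w"
      using True phi_props(3)[OF uB(1), of i] ty tb0 phib by simp
    then have "remove_succ succ w c (\<phi> u) = succ i w" using pw True unfolding remove_succ_def by simp
    also have "\<dots> = \<phi> (\<sigma> None x)" using phi_props(3)[OF bB, of i] phib unfolding x_def by simp
    finally show ?thesis using True s2N dist unfolding \<sigma>2_def by simp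
  next
    case False
    have ne: "succ c (\<phi> u) \<noteq> w" using succ_to_w[OF uB] False by blast
    have "\<sigma>2 (Some c) u = \<sigma> (Some c) u" using False ux unfolding \<sigma>2_def by auto
    then show ?thesis using ne pw phi_props(3)[OF uB(1)] s2N unfolding remove_succ_def by simp
  qed
qed

end


context msetup begin

abbreviation rs where "rs \<equiv> remove_succ succ w"

lemma rs_in: assumes u: "u \<in> W - {w}" shows "rs c u \<in> W - {w}"
proof (cases "succ c u = w")
  case True
  have "succ c w \<noteq> w"
  proof
    assume "succ c w = w"
    then have "succ c u = succ c w" using True by simp
    then show False using succ_inj u by auto
  qed
  then show ?thesis using True u succW[OF wW] unfolding remove_succ_def by auto
next
  case False then show ?thesis using u succW unfolding remove_succ_def by auto
qed

lemma rs_inj: "inj_on (rs c) (W - {w})"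
proof (rule inj_onI)
  fix u v assume u: "u \<in> W - {w}" and v: "v \<in> W - {w}" and e: "rs c u = rs c v"
  show "u = v"
  proof (cases "succ c u = w"; cases "succ c v = w")
    assume "succ c u = w" "succ c v = w" then show ?thesis using succ_inj by metis
  next
    assume h: "succ c u = w" "succ c v \<noteq> w"
    then have "succ c w = succ c v" using e u v unfolding remove_succ_def by auto
    then show ?thesis using succ_inj v by blast
  next
    assume h: "succ c u \<noteq> w" "succ c v = w"
    then have "succ c u = succ c w" using e u v unfolding remove_succ_def by auto
    then show ?thesis using succ_inj u by blast
  next
    assume h: "succ c u \<noteq> w" "succ c v \<noteq> w"
    then have "succ c u = succ c v" using e u v unfolding remove_succ_def by auto
    then show ?thesis using succ_inj by blast
  qed
qed

lemma rs_out: "u \<notin> W - {w} \<Longrightarrow> rs c u = u"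
proof -
  assume u: "u \<notin> W - {w}"
  show ?thesis
  proof (cases "u = w")
    case True then show ?thesis unfolding remove_succ_def by simp
  next
    case False
    then have "u \<notin> W" using u by auto
    then have "succ c u = u" using succ_out by simp
    then show ?thesis using False unfolding remove_succ_def by simp
  qed
qed

lemma rs_perm: "rs c permutes (W - {w})"
proof (rule bij_imp_permutes)
  have "rs c ` (W - {w}) \<subseteq> W - {w}"
  proof (rule image_subsetI)
    fix u assume "u \<in> W - {w}" then show "rs c u \<in> W - {w}" by (rule rs_in)
  qed
  moreover have "finite (W - {w})" using Wfin by simp
  ultimately have "rs c ` (W - {w}) = W - {w}" using endo_inj_surj[OF _ _ rs_inj] by blast
  then show "bij_betw (rs c) (W - {w}) (W - {w})" using rs_inj unfolding bij_betw_def by simp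
  show "\<And>u. u \<notin> W - {w} \<Longrightarrow> rs c u = u" using rs_out .
qed

lemma rs_nb: "u \<in> W - {w} \<Longrightarrow> nb c (rs c u) = nb c u"
proof -
  assume u: "u \<in> W - {w}"
  show ?thesis
  proof (cases "succ c u = w")
    case True
    then have "nb c (succ c w) = nb c u" using nbsucc[OF wW] nbsucc[of u c] u by simp
    then show ?thesis using True u unfolding remove_succ_def by simp
  next
    case False then show ?thesis using nbsucc u unfolding remove_succ_def by simp
  qed
qed

lemma fix_iter: "succ c w = w \<Longrightarrow> (succ c ^^ n) w = w"
  by (induction n) auto

lemma rs_orbit_aux:
  "u \<in> W - {w} \<Longrightarrow> (succ c ^^ n) u \<in> W - {w} \<Longrightarrow> \<exists>m. (rs c ^^ m) u = (succ c ^^ n) u"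
proof (induction n arbitrary: u rule: less_induct)
  case (less n)
  show ?case
  proof (cases n)
    case 0 then show ?thesis by (intro exI[of _ 0]) simp
  next
    case (Suc k)
    have e1: "(succ c ^^ n) u = (succ c ^^ k) (succ c u)" using Suc by (simp del: funpow.simps add: funpow_Suc_right)
    show ?thesis
    proof (cases "succ c u = w")
      case False
      have su: "succ c u \<in> W - {w}" using False succW less.prems(1) by auto
      have rsu: "rs c u = succ c u" using False less.prems(1) unfolding remove_succ_def by auto
      obtain m where "(rs c ^^ m) (succ c u) = (succ c ^^ k) (succ c u)"
        using less.IH[of k "succ c u"] Suc su less.prems(2) e1 by auto
      then have "(rs c ^^ Suc m) u = (succ c ^^ n) u" using rsu e1 by (simp del: funpow.simps add: funpow_Suc_right)
      then show ?thesis by blast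
    next
      case True
      have k0: "k \<noteq> 0"
      proof
        assume "k = 0"
        then have "(succ c ^^ n) u = w" using e1 True by simp
        then show False using less.prems(2) by simp
      qed
      then obtain j where j: "k = Suc j" by (cases k) auto
      have e2: "(succ c ^^ n) u = (succ c ^^ j) (succ c w)" using e1 True j by (simp del: funpow.simps add: funpow_Suc_right)
      have sw: "succ c w \<noteq> w"
      proof
        assume f: "succ c w = w"
        then have "(succ c ^^ n) u = w" using e2 fix_iter[OF f] by simp
        then show False using less.prems(2) by simp
      qed
      have swW: "succ c w \<in> W - {w}" using sw succW[OF wW] by auto
      have rsu: "rs c u = succ c w" using True less.prems(1) unfolding remove_succ_def by auto
      obtain m where "(rs c ^^ m) (succ c w) = (succ c ^^ j) (succ c w)"
        using less.IH[of j "succ c w"] Suc j swW less.prems(2) e2 by auto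
      then have "(rs c ^^ Suc m) u = (succ c ^^ n) u" using rsu e2 by (simp del: funpow.simps add: funpow_Suc_right)
      then show ?thesis by blast
    qed
  qed
qed

lemma rs_orbit: "u \<in> W - {w} \<Longrightarrow> u' \<in> W - {w} \<Longrightarrow> nb c u = nb c u' \<Longrightarrow> \<exists>m. (rs c ^^ m) u = u'"
proof -
  assume u: "u \<in> W - {w}" and u': "u' \<in> W - {w}" and e: "nb c u = nb c u'"
  obtain n where n: "(succ c ^^ n) u = u'" using orbit[of u u' c] u u' e by auto
  then have "(succ c ^^ n) u \<in> W - {w}" using u' by simp
  then obtain m where "(rs c ^^ m) u = (succ c ^^ n) u" using rs_orbit_aux[OF u] by blast
  then show ?thesis using n by blast
qed

abbreviation RW where "RW \<equiv> (\<lambda>p s. p \<in> W - {w} \<and> s \<in> W - {w} \<and> (\<exists>c. nb c p = nb c s))"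

definition z0 where "z0 = succ i w"
lemma z0W: "z0 \<in> W - {w}" unfolding z0_def using succ_i_ne succW[OF wW] by auto
definition pw where "pw p = (if p = w then z0 else p)"

lemma pw_step: assumes "p \<in> W" "s \<in> W" "nb c p = nb c s" shows "RW\<^sup>*\<^sup>* (pw p) (pw s)"
proof -
  have nz: "nb i z0 = nb i w" unfolding z0_def using nbsucc[OF wW] .
  consider "p = w" "s = w" | "p = w" "s \<noteq> w" | "p \<noteq> w" "s = w" | "p \<noteq> w" "s \<noteq> w" by blast
  then show ?thesis
  proof cases
    case 1 then show ?thesis by simp
  next
    case 2
    have "c = i" using leaf_eq[of c s] assms 2 by metis
    then have "nb i z0 = nb i s" using assms 2 nz by simp
    then have "RW z0 s" using z0W assms 2 by blast
    then show ?thesis using 2 unfolding pw_def by auto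
  next
    case 3
    have "c = i" using leaf_eq[of c p] assms 3 by metis
    then have "nb i p = nb i z0" using assms 3 nz by simp
    then have "RW p z0" using z0W assms 3 by blast
    then show ?thesis using 3 unfolding pw_def by auto
  next
    case 4
    then have "RW p s" using assms by auto
    then show ?thesis using 4 unfolding pw_def by auto
  qed
qed

lemma RW_conn: assumes u: "u \<in> W - {w}" and v: "v \<in> W - {w}" shows "RW\<^sup>*\<^sup>* u v"
proof -
  have "(\<lambda>p s. p \<in> W \<and> s \<in> W \<and> (\<exists>c. nb c p = nb c s))\<^sup>*\<^sup>* u v" using Wconn u v by simp
  then have "RW\<^sup>*\<^sup>* (pw u) (pw v)"
  proof (induction rule: rtranclp_induct)
    case base then show ?case by simp
  next
    case (step y' z)
    then have "RW\<^sup>*\<^sup>* (pw y') (pw z)" using pw_step by blast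
    then show ?case using step.IH by (rule rtranclp_trans[rotated])
  qed
  then show ?thesis using u v unfolding pw_def by auto
qed

lemma part1: "constellation (W - {w}) w0 nb (remove_succ succ w)"
  unfolding constellation_def
proof (intro conjI allI ballI impI)
  show "finite (W - {w})" using Wfin by simp
  show "w0 \<in> W - {w}" using w0W ww0 by simp
  fix c show "rs c permutes (W - {w})" using rs_perm .
  fix u assume "u \<in> W - {w}" then show "nb c (rs c u) = nb c u" using rs_nb by simp
next
  fix c u u' assume "u \<in> W - {w}" "u' \<in> W - {w}" "nb c u = nb c u'"
  then show "\<exists>n. (rs c ^^ n) u = u'" using rs_orbit by blast
next
  fix u v assume "u \<in> W - {w}" "v \<in> W - {w}"
  then show "RW\<^sup>*\<^sup>* u v" using RW_conn by blast
qed

end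


context msetup begin

lemma part3:
  fixes V' :: "'v set" and \<sigma>' :: "'c option \<Rightarrow> 'v \<Rightarrow> 'v" and r' :: 'v
  assumes G': "Gq V' \<sigma>' r'" and R': "psi_rel V' \<sigma>' r' (W - {w}) w0 nb (remove_succ succ w)"
  shows "PL_homeomorphic V (hat0 \<sigma>) V' (hat0 \<sigma>')"
proof -
  obtain \<psi> where bij: "bij_betw \<psi> V2 V'" and hom: "\<forall>v\<in>V2. \<forall>a. \<psi> (\<sigma>2 a v) = \<sigma>' a (\<psi> v)"
    using psi_iso[OF G2 G' psi_rel2 R'] by blast
  interpret P: pillow V "hat0 \<sigma>" V' "hat0 \<sigma>'" \<psi> i b b' x y
  proof
    show "CARD('c) \<ge> 2" using card3 by simp
    show "invol V (hat0 \<sigma>)" unfolding invol_def hat0_def using sV ss by simp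
    show "invol V' (hat0 \<sigma>')" unfolding invol_def hat0_def using Gq_facts(3,5)[OF G'] by simp
    show "b \<in> V" using bV .
    show "b' \<in> V" using b'V .
    show "b \<noteq> b'" "x \<noteq> b" "x \<noteq> b'" "y \<noteq> b" "y \<noteq> b'" "x \<noteq> y" using dist by auto
    show "\<And>c. c \<noteq> i \<Longrightarrow> hat0 \<sigma> c b = b'" unfolding hat0_def using tb by blast
    show "hat0 \<sigma> i b = x" "hat0 \<sigma> i b' = y" unfolding hat0_def x_def y_def by simp_all
    show "bij_betw \<psi> (V - {b, b'}) V'" using bij unfolding V2_def .
    show "hat0 \<sigma>' c (\<psi> u) = \<psi> (hat0 \<sigma> c u)" if "u \<in> V - {b, b'}" "c = i \<Longrightarrow> u \<noteq> x \<and> u \<noteq> y" for u c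
    proof -
      have u: "u \<in> V2" using that(1) unfolding V2_def .
      have "\<sigma>2 (Some c) u = \<sigma> (Some c) u" using that(2) unfolding \<sigma>2_def by auto
      moreover have "\<psi> (\<sigma>2 (Some c) u) = \<sigma>' (Some c) (\<psi> u)" using hom u by blast
      ultimately show ?thesis unfolding hat0_def by simp
    qed
    show "hat0 \<sigma>' i (\<psi> x) = \<psi> y"
    proof -
      have "\<sigma>2 (Some i) x = y" unfolding \<sigma>2_def by simp
      moreover have "\<psi> (\<sigma>2 (Some i) x) = \<sigma>' (Some i) (\<psi> x)" using hom xV2 by blast
      ultimately show ?thesis unfolding hat0_def by simp
    qed
    show "hat0 \<sigma>' i (\<psi> y) = \<psi> x"
    proof -
      have "\<sigma>2 (Some i) y = x" using dist unfolding \<sigma>2_def by auto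
      moreover have "\<psi> (\<sigma>2 (Some i) y) = \<sigma>' (Some i) (\<psi> y)" using hom yV2 by blast
      ultimately show ?thesis unfolding hat0_def by simp
    qed
  qed
  show ?thesis using P.pillow_homeo .
qed

end

theorem mainTheorem17:
  fixes V :: "'v set" and \<sigma> :: "'c::finite option \<Rightarrow> 'v \<Rightarrow> 'v" and r :: 'v
    and W :: "'w set" and w0 :: 'w and nb :: "'c \<Rightarrow> 'w \<Rightarrow> 'x"
    and succ :: "'c \<Rightarrow> 'w \<Rightarrow> 'w" and w :: 'w and i :: 'c
  assumes "CARD('c) \<ge> 3"
    and "Gq V \<sigma> r"
    and "constellation W w0 nb succ"
    and "psi_rel V \<sigma> r W w0 nb succ"
    and "w \<in> W" and "w \<noteq> w0"
    and "\<forall>c. c \<noteq> i \<longrightarrow> nbdeg W nb c w = 1"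
    and "nbdeg W nb i w \<ge> 2"
  shows "constellation (W - {w}) w0 nb (remove_succ succ w) \<and>
         (\<exists>(V' :: 'v set) (\<sigma>' :: 'c option \<Rightarrow> 'v \<Rightarrow> 'v) r'. Gq V' \<sigma>' r' \<and> psi_rel V' \<sigma>' r' (W - {w}) w0 nb (remove_succ succ w)) \<and>
         (\<forall>(V' :: 'v set) (\<sigma>' :: 'c option \<Rightarrow> 'v \<Rightarrow> 'v) r'.
            Gq V' \<sigma>' r' \<and> psi_rel V' \<sigma>' r' (W - {w}) w0 nb (remove_succ succ w) \<longrightarrow>
            PL_homeomorphic V (hat0 \<sigma>) V' (hat0 \<sigma>'))"
proof -
  interpret M: msetup V \<sigma> r W w0 nb succ w i
    using assms by unfold_locales
  show ?thesis
  proof (intro conjI allI impI)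
    show "constellation (W - {w}) w0 nb (remove_succ succ w)" using M.part1 .
    show "\<exists>(V' :: 'v set) (\<sigma>' :: 'c option \<Rightarrow> 'v \<Rightarrow> 'v) r'. Gq V' \<sigma>' r' \<and> psi_rel V' \<sigma>' r' (W - {w}) w0 nb (remove_succ succ w)"
      using M.G2 M.psi_rel2 by blast
    fix V' :: "'v set" and \<sigma>' :: "'c option \<Rightarrow> 'v \<Rightarrow> 'v" and r'
    assume "Gq V' \<sigma>' r' \<and> psi_rel V' \<sigma>' r' (W - {w}) w0 nb (remove_succ succ w)"
    then show "PL_homeomorphic V (hat0 \<sigma>) V' (hat0 \<sigma>')" using M.part3 by blast
  qed
qed



end
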